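(* Let $h:[0,1]\to(0,\infty)$ and $f:[0,\infty)\to[0,\infty)$ be continuously differentiable, suppose there is $t_0\ge0$ with $f>0$ on $[t_0,\infty)$ and $f\in C^2([t_0,\infty))$, put $g=\log f$ on $[t_0,\infty)$, and assume condition (H1) of the context. Let $(\lambda_n,\mu_n,u_n)\in(0,\infty)\times(0,\infty)\times C^2([0,1])$ satisfy $-u_n''-\frac1r u_n'=\lambda_n h(r)f(u_n)$, $u_n>0$ in $(0,1)$, $u_n(0)=\mu_n$, $u_n'(0)=0=u_n(1)$, with $\mu_n\to\infty$. Define $\gamma_{0,n}>0$ by $\lambda_n h(0)f'(\mu_n)\gamma_{0,n}^2=1$, and for $r\in[0,1]$ with $u_n(r)\ge t_0$ let $$\phi_n(r)=\lambda_n r^2 h(r)f'(u_n(r)),\qquad \psi_n(r)=-r\,g'(u_n(r))\,u_n'(r).$$ Then, up to a subsequence, there exists $(r_{1,n})\subset(0,1)$ such that $\phi_n(r_{1,n})$ is a local maximum value of $\phi_n$ (in particular $\phi_n'(r_{1,n})=0$) for all $n$, and as $n\to\infty$: $\phi_n(r_{1,n})\to2$, $\psi_n(r_{1,n})\to2$, $r_{1,n}/\gamma_{0,n}\to2\sqrt2$, $$u_n(r_{1,n})=\mu_n+O\Big(\frac1{g(\mu_n)}\Big)\frac{g(\mu_n)}{g'(\mu_n)},$$ $g(u_n(r_{1,n}))/g(\mu_n)\to1$ and $g'(u_n(r_{1,n}))/g'(\mu_n)\to1$.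
   Context: Condition (H1): (i) $g'(t)>0$ and $g''(t)>0$ for all $t\ge t_0$, and there is a pair $(q,p)$ with either $q=1$ and $p\in(0,\infty]$, or $q\in(1,\infty)$ and $p\in(0,\infty)$, such that $\lim_{t\to\infty}\frac{g'(t)^2}{g(t)g''(t)}=q$ and $\lim_{t\to\infty}\frac{tg'(t)}{g(t)}=p$; (ii) if $q=1$, then $tg'(t)/g(t)$ is nondecreasing on $[t_0,\infty)$ and there exist $k\in\mathbb{N}$ and $\hat g\in C^2([t_0,\infty))$ with $f=\exp_k\circ\hat g$ and $\hat g'/\hat g$ nonincreasing on $[t_0,\infty)$ ($\exp_1=\exp$, $\exp_k=\exp_{k-1}\circ\exp$). *)

theory Defs
  imports "HOL-Analysis.Analysis" "HOL-Library.Landau_Symbols"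
begin

definition C2_with :: "real set \<Rightarrow> (real \<Rightarrow> real) \<Rightarrow> (real \<Rightarrow> real) \<Rightarrow> (real \<Rightarrow> real) \<Rightarrow> bool" where
  "C2_with S u u' u'' \<longleftrightarrow>
     (\<forall>r\<in>S. (u has_real_derivative u' r) (at r within S) \<and>
             (u' has_real_derivative u'' r) (at r within S)) \<and> continuous_on S u''"

definition C1_with :: "real set \<Rightarrow> (real \<Rightarrow> real) \<Rightarrow> (real \<Rightarrow> real) \<Rightarrow> bool" where
  "C1_with S u u' \<longleftrightarrow>
     (\<forall>r\<in>S. (u has_real_derivative u' r) (at r within S)) \<and> continuous_on S u'"

text \<open>Condition (H1); g, g', g'' are log f and its derivatives on [t0,oo).\<close>
definition H1 :: "real \<Rightarrow> (real \<Rightarrow> real) \<Rightarrow> (real \<Rightarrow> real) \<Rightarrow> (real \<Rightarrow> real) \<Rightarrow> (real \<Rightarrow> real) \<Rightarrow> bool" where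
  "H1 t0 f g g' g'' \<longleftrightarrow>
     (\<forall>t\<ge>t0. g' t > 0 \<and> g'' t > 0) \<and>
     (\<exists>q::real. ((\<lambda>t. (g' t)^2 / (g t * g'' t)) \<longlongrightarrow> q) at_top \<and>
        ((q = 1 \<and> ((\<exists>p>0. ((\<lambda>t. t * g' t / g t) \<longlongrightarrow> p) at_top)
                     \<or> filterlim (\<lambda>t. t * g' t / g t) at_top at_top))
         \<or> (q > 1 \<and> (\<exists>p>0. ((\<lambda>t. t * g' t / g t) \<longlongrightarrow> p) at_top))) \<and>
        (q = 1 \<longrightarrow>
           (\<forall>s t. t0 \<le> s \<longrightarrow> s \<le> t \<longrightarrow> s * g' s / g s \<le> t * g' t / g t) \<and>
           (\<exists>k::nat. k \<ge> 1 \<and> (\<exists>gh gh' gh''. C2_with {t0..} gh gh' gh'' \<and>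
               (\<forall>t\<ge>t0. f t = (exp ^^ k) (gh t)) \<and>
               (\<forall>s t. t0 \<le> s \<longrightarrow> s \<le> t \<longrightarrow> gh' t / gh t \<le> gh' s / gh s)))))"

definition phi :: "real \<Rightarrow> (real \<Rightarrow> real) \<Rightarrow> (real \<Rightarrow> real) \<Rightarrow> (real \<Rightarrow> real) \<Rightarrow> real \<Rightarrow> real" where
  "phi lam h f' u r = lam * r^2 * h r * f' (u r)"

definition psi :: "(real \<Rightarrow> real) \<Rightarrow> (real \<Rightarrow> real) \<Rightarrow> (real \<Rightarrow> real) \<Rightarrow> real \<Rightarrow> real" where
  "psi g' u u' r = - r * g' (u r) * u' r"

end

theory Submission
  imports Defs
begin


lemma C2_at:
  assumes "C2_with S u u' u''" "x \<in> interior S"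
  shows "(u has_real_derivative u' x) (at x)" "(u' has_real_derivative u'' x) (at x)"
  using assms interior_subset[of S] unfolding C2_with_def
  by (auto simp: at_within_interior[OF assms(2), symmetric])

lemma C2_cont:
  assumes "C2_with S u u' u''"
  shows "continuous_on S u" "continuous_on S u'" "continuous_on S u''"
  using assms unfolding C2_with_def by (auto intro!: DERIV_continuous_on)

lemma C1_at:
  assumes "C1_with S u u'" "x \<in> interior S"
  shows "(u has_real_derivative u' x) (at x)"
  using assms interior_subset[of S] unfolding C1_with_def
  by (auto simp: at_within_interior[OF assms(2), symmetric])

lemma C1_cont:
  assumes "C1_with S u u'"
  shows "continuous_on S u" "continuous_on S u'"
  using assms unfolding C1_with_def by (auto intro!: DERIV_continuous_on)

lemma mvt_open:
  fixes f f' :: "real \<Rightarrow> real"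
  assumes "a < b" "continuous_on {a..b} f" "\<And>x. a < x \<Longrightarrow> x < b \<Longrightarrow> (f has_real_derivative f' x) (at x)"
  shows "\<exists>z. a < z \<and> z < b \<and> f b - f a = (b - a) * f' z"
proof -
  obtain l z where "a < z" "z < b" "DERIV f z :> l" "f b - f a = (b - a) * l"
    using MVT[OF assms(1,2)] assms(3) real_differentiable_def by blast
  then show ?thesis using assms(3) DERIV_unique by metis
qed



lemma g_facts:
  fixes g g' g'' :: "real \<Rightarrow> real"
  assumes gC2: "C2_with {t0..} g g' g''" and gp: "\<forall>t\<ge>t0. g' t > 0 \<and> g'' t > 0"
  shows g'_diff: "\<And>s t. t0 \<le> s \<Longrightarrow> s < t \<Longrightarrow> \<exists>z. s < z \<and> z < t \<and> g' t - g' s = (t - s) * g'' z"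
    and g_diff: "\<And>s t. t0 \<le> s \<Longrightarrow> s < t \<Longrightarrow> \<exists>z. s < z \<and> z < t \<and> g t - g s = (t - s) * g' z"
proof -
  fix s t assume st: "t0 \<le> s" "s < t"
  have c: "continuous_on {s..t} g" "continuous_on {s..t} g'"
    using C2_cont[OF gC2] st by (auto elim: continuous_on_subset)
  have d: "(g has_real_derivative g' x) (at x)" "(g' has_real_derivative g'' x) (at x)" if "s < x" for x
    using C2_at[OF gC2, of x] that st by auto
  show "\<exists>z. s < z \<and> z < t \<and> g' t - g' s = (t - s) * g'' z"
    by (rule mvt_open[OF st(2) c(2)]) (use d in auto)
  show "\<exists>z. s < z \<and> z < t \<and> g t - g s = (t - s) * g' z"
    by (rule mvt_open[OF st(2) c(1)]) (use d in auto)
qed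

lemma g'_mono:
  assumes gC2: "C2_with {t0..} g g' g''" and gp: "\<forall>t\<ge>t0. g' t > 0 \<and> g'' t > 0"
    and "t0 \<le> s" "s \<le> t"
  shows "g' s \<le> g' t"
proof (cases "s = t")
  case False
  then obtain z where "s < z" "z < t" "g' t - g' s = (t - s) * g'' z"
    using g'_diff[OF gC2 gp, of s t] assms by force
  moreover have "g'' z > 0" using gp \<open>s < z\<close> assms by auto
  ultimately show ?thesis using assms by (smt (verit) mult_pos_pos)
qed simp

lemma g_bounds:
  assumes gC2: "C2_with {t0..} g g' g''" and gp: "\<forall>t\<ge>t0. g' t > 0 \<and> g'' t > 0"
    and "t0 \<le> s" "s \<le> t"
  shows "g' s * (t - s) \<le> g t - g s" "g t - g s \<le> g' t * (t - s)"
proof -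
  have "g' s * (t - s) \<le> g t - g s \<and> g t - g s \<le> g' t * (t - s)"
  proof (cases "s = t")
    case False
    then obtain z where z: "s < z" "z < t" "g t - g s = (t - s) * g' z"
      using g_diff[OF gC2 gp, of s t] assms by force
    have "g' s \<le> g' z" "g' z \<le> g' t" using g'_mono[OF gC2 gp] z assms by auto
    then show ?thesis using z assms by (simp add: mult.commute mult_right_mono)
  qed simp
  then show "g' s * (t - s) \<le> g t - g s" "g t - g s \<le> g' t * (t - s)" by auto
qed

lemma g_top:
  assumes gC2: "C2_with {t0..} g g' g''" and gp: "\<forall>t\<ge>t0. g' t > 0 \<and> g'' t > 0"
  shows "filterlim g at_top at_top"
proof -
  have d: "g' t0 > 0" using gp by auto
  have lin0: "filterlim (\<lambda>t. (g t0 - g' t0 * t0) + g' t0 * t) at_top at_top"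
    by (rule filterlim_tendsto_add_at_top[OF tendsto_const filterlim_tendsto_pos_mult_at_top[OF tendsto_const d filterlim_ident]])
  have lin: "filterlim (\<lambda>t. g t0 + g' t0 * (t - t0)) at_top at_top"
    using lin0 by (simp add: algebra_simps)
  show ?thesis
  proof (rule filterlim_at_top_mono[OF lin])
    show "\<forall>\<^sub>F x in at_top. g t0 + g' t0 * (x - t0) \<le> g x"
      using eventually_ge_at_top[of t0]
      by eventually_elim (use g_bounds[OF gC2 gp, of t0] in force)
  qed
qed

lemma H1_q:
  assumes "H1 t0 f g g' g''"
  shows "\<exists>q\<ge>1. ((\<lambda>t. (g' t)^2 / (g t * g'' t)) \<longlongrightarrow> q) at_top"
proof -
  obtain q where q: "((\<lambda>t. (g' t)^2 / (g t * g'' t)) \<longlongrightarrow> q) at_top" "q = 1 \<or> q > 1"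
    using assms unfolding H1_def by (elim conjE exE) (metis (no_types, lifting))
  then show ?thesis by (intro exI[of _ q]) auto
qed

lemma rho_lim:
  assumes gC2: "C2_with {t0..} g g' g''" and gp: "\<forall>t\<ge>t0. g' t > 0 \<and> g'' t > 0"
    and H1: "H1 t0 f g g' g''"
  shows "((\<lambda>t. g'' t / (g' t)^2) \<longlongrightarrow> 0) at_top"
proof -
  obtain q where q: "q \<ge> 1" "((\<lambda>t. (g' t)^2 / (g t * g'' t)) \<longlongrightarrow> q) at_top"
    using H1_q[OF H1] by blast
  have gt: "filterlim g at_top at_top" by (rule g_top[OF gC2 gp])
  have "((\<lambda>t. inverse ((g' t)^2 / (g t * g'' t)) * inverse (g t)) \<longlongrightarrow> inverse q * 0) at_top"
    using q by (intro tendsto_mult tendsto_inverse tendsto_inverse_0_at_top[OF gt]) auto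
  then have l: "((\<lambda>t. inverse ((g' t)^2 / (g t * g'' t)) * inverse (g t)) \<longlongrightarrow> 0) at_top" by simp
  show ?thesis
  proof (rule Lim_transform_eventually[OF l])
    have "\<forall>\<^sub>F t in at_top. g t > 0" using gt by (simp add: filterlim_at_top_dense)
    then show "\<forall>\<^sub>F t in at_top. inverse ((g' t)^2 / (g t * g'' t)) * inverse (g t) = g'' t / (g' t)^2"
      using eventually_ge_at_top[of t0]
      proof eventually_elim
      case (elim t)
      then have "g' t > 0" "g'' t > 0" using gp by auto
      then show ?case using elim by (simp add: field_simps power2_eq_square)
    qed
  qed
qed



lemma exp_lip:
  fixes x y :: real
  assumes "x \<le> 0" "y \<le> 0"
  shows "\<bar>exp x - exp y\<bar> \<le> \<bar>x - y\<bar>"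
proof -
  have *: "exp b - exp a \<le> b - a" if "a \<le> b" "b \<le> 0" for a b :: real
  proof -
    have "exp b - exp a = exp b * (1 - exp (a - b))" by (simp add: algebra_simps exp_diff)
    also have "1 - exp (a - b) \<le> b - a" using exp_ge_add_one_self[of "a - b"] by linarith
    moreover have "1 - exp (a - b) \<ge> 0" using that by simp
    moreover have "exp b \<le> 1" using that by simp
    ultimately show ?thesis by (smt (verit) exp_gt_zero mult_left_le_one_le)
  qed
  show ?thesis using *[of x y] *[of y x] assms by (cases "x \<le> y") auto
qed

locale fsetting =
  fixes f f' g g' g'' :: "real \<Rightarrow> real" and t0 :: real
  assumes f_C1: "C1_with {0..} f f'"
    and f_nonneg: "\<forall>t\<ge>0. f t \<ge> 0"
    and t0: "t0 \<ge> 0"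
    and f_pos: "\<forall>t\<ge>t0. f t > 0"
    and g_def: "\<forall>t\<ge>t0. g t = ln (f t)"
    and g_C2: "C2_with {t0..} g g' g''"
    and H1: "H1 t0 f g g' g''"
begin

lemma gp: "\<forall>t\<ge>t0. g' t > 0 \<and> g'' t > 0" using H1 unfolding H1_def by blast

lemma fexp: "t \<ge> t0 \<Longrightarrow> f t = exp (g t)" using f_pos g_def by simp

lemma g'mono: "t0 \<le> s \<Longrightarrow> s \<le> t \<Longrightarrow> g' s \<le> g' t" by (rule g'_mono[OF g_C2 gp])
lemma gb1: "t0 \<le> s \<Longrightarrow> s \<le> t \<Longrightarrow> g' s * (t - s) \<le> g t - g s" by (rule g_bounds(1)[OF g_C2 gp])
lemma gb2: "t0 \<le> s \<Longrightarrow> s \<le> t \<Longrightarrow> g t - g s \<le> g' t * (t - s)" by (rule g_bounds(2)[OF g_C2 gp])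
lemma gtop: "filterlim g at_top at_top" by (rule g_top[OF g_C2 gp])
lemma rho: "((\<lambda>t. g'' t / (g' t)^2) \<longlongrightarrow> 0) at_top" by (rule rho_lim[OF g_C2 gp H1])

lemma gmono: "t0 \<le> s \<Longrightarrow> s \<le> t \<Longrightarrow> g s \<le> g t"
  using gb1[of s t] gp by (smt (verit) mult_nonneg_nonneg)

lemma fmono: "t0 \<le> s \<Longrightarrow> s \<le> t \<Longrightarrow> f s \<le> f t"
  using gmono[of s t] fexp[of s] fexp[of t] by simp

lemma f'_eq: assumes "t > t0" shows "f' t = f t * g' t"
proof -
  have d1: "(f has_real_derivative f' t) (at t)" using C1_at[OF f_C1, of t] assms t0 by simp
  have d2: "(g has_real_derivative g' t) (at t)" using C2_at[OF g_C2, of t] assms by simp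
  have d3: "((\<lambda>x. ln (f x)) has_real_derivative f' t / f t) (at t)"
    using f_pos assms by (auto intro!: derivative_eq_intros d1)
  have "(g has_real_derivative f' t / f t) (at t)"
    by (rule has_field_derivative_transform_within_open[OF d3, of "{t0<..}"]) (use g_def assms in auto)
  then have "g' t = f' t / f t" using DERIV_unique d2 by blast
  moreover have "f t > 0" using f_pos assms by auto
  ultimately show ?thesis by simp
qed

lemma N1:
  assumes "\<epsilon> > 0" "A > 0"
  shows "\<forall>\<^sub>F m in at_top. m - A / g' m > t0 \<and>
           (\<forall>t. m - A / g' m \<le> t \<and> t \<le> m \<longrightarrow> 1 - \<epsilon> \<le> g' t / g' m \<and> g' t / g' m \<le> 1)"
proof -
  define \<delta> where "\<delta> = \<epsilon> / A"
  have "\<delta> > 0" using assms by (simp add: \<delta>_def)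
  then have "\<forall>\<^sub>F t in at_top. g'' t / (g' t)^2 < \<delta>" using rho order_tendstoD(2) by blast
  then obtain T where T: "\<And>t. t \<ge> T \<Longrightarrow> g'' t / (g' t)^2 < \<delta>" by (auto simp: eventually_at_top_linorder)
  have gt0: "g' t0 > 0" using gp by auto
  show ?thesis
  proof (rule eventually_mono[OF eventually_ge_at_top[of "max T t0 + 1 + A / g' t0"]], intro conjI allI impI)
    fix m assume m: "max T t0 + 1 + A / g' t0 \<le> m"
    have mt0: "m \<ge> t0" using m gt0 assms by (smt (verit) divide_pos_pos)
    have am: "g' m \<ge> g' t0" using g'mono[of t0 m] mt0 by auto
    have "A / g' m \<le> A / g' t0" using am gt0 assms by (simp add: frac_le)
    then have low: "m - A / g' m \<ge> max T t0 + 1" using m by linarith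
    then show "m - A / g' m > t0" by linarith
    fix t assume t: "m - A / g' m \<le> t \<and> t \<le> m"
    have tt0: "t \<ge> t0" "t \<ge> T" using low t by auto
    have pos: "g' m > 0" "g' t > 0" using gp mt0 tt0 by auto
    have le: "g' t \<le> g' m" using g'mono tt0 t by auto
    have "g' m - g' t \<le> \<epsilon> * g' m"
    proof (cases "t = m")
      case False
      then obtain z where z: "t < z" "z < m" "g' m - g' t = (m - t) * g'' z"
        using g'_diff[OF g_C2 gp, of t m] tt0 t by force
      have gz: "g' z > 0" "g' z \<le> g' m" using gp g'mono[of z m] z tt0 by auto
      have "g'' z < \<delta> * (g' z)^2" using T[of z] z tt0 gz by (simp add: field_simps)
      also have "\<dots> \<le> \<delta> * (g' m)^2" using gz \<open>\<delta> > 0\<close> by (simp add: power_mono)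
      finally have g2: "g'' z \<le> \<delta> * (g' m)^2" by simp
      have mt: "m - t \<le> A / g' m" "m - t \<ge> 0" using t by auto
      have "(m - t) * g'' z \<le> (A / g' m) * (\<delta> * (g' m)^2)"
        using mult_mono[OF mt(1) g2] mt(2) gp z tt0 by (smt (verit) divide_nonneg_nonneg assms(2) pos(1) zero_le_mult_iff zero_le_power2 \<open>\<delta> > 0\<close>)
      also have "\<dots> = \<epsilon> * g' m" using pos assms by (simp add: \<delta>_def power2_eq_square)
      finally show ?thesis using z by simp
    qed (use pos assms in simp)
    then show "1 - \<epsilon> \<le> g' t / g' m" "g' t / g' m \<le> 1"
      using pos le by (simp_all add: field_simps)
  qed
qed

lemma N2:
  assumes "\<epsilon> > 0"
  shows "\<forall>\<^sub>F m in at_top. \<forall>t. 0 \<le> t \<and> t \<le> m \<longrightarrow> \<bar>f t / f m - exp (g' m * (t - m))\<bar> \<le> \<epsilon>"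
proof -
  define e where "e = min \<epsilon> 1"
  have e: "e > 0" "e \<le> 1" "e \<le> \<epsilon>" using assms by (auto simp: e_def)
  define A where "A = ln (4 / e)"
  have A: "A > 0" using e by (simp add: A_def)
  have eA: "exp (- A) = e / 4" using e by (simp add: A_def exp_minus)
  define e1 where "e1 = e / (4 * A)"
  have e1: "e1 > 0" "e1 * A = e / 4" using e A by (auto simp: e1_def)
  have "continuous_on {0..t0} f" using C1_cont(1)[OF f_C1] by (auto elim: continuous_on_subset)
  then obtain Mf where Mf: "\<And>t. t \<in> {0..t0} \<Longrightarrow> norm (f t) \<le> Mf"
    using continuous_on_compact_bound[of "{0..t0}" f] by auto
  have ef: "filterlim (\<lambda>m. exp (g m)) at_top at_top"
    by (rule filterlim_compose[OF exp_at_top gtop])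
  have E2: "\<forall>\<^sub>F m in at_top. exp (g m) \<ge> 4 * Mf / e"
    using ef by (simp add: filterlim_at_top)
  show ?thesis
    using N1[OF e1(1) A] E2 eventually_ge_at_top[of t0]
  proof eventually_elim
    case (elim m)
    define a where "a = g' m"
    have mt0: "m \<ge> t0" using elim by auto
    have a: "a > 0" using gp mt0 by (simp add: a_def)
    define t1 where "t1 = m - A / a"
    have t1: "t1 > t0" "t1 \<le> m" using elim a A by (auto simp: t1_def a_def)
    have fm: "f m = exp (g m)" using fexp mt0 by simp
    have near: "\<bar>f t / f m - exp (g' m * (t - m))\<bar> \<le> e / 4 \<and> g m - g t \<le> A"
      if t: "t1 \<le> t" "t \<le> m" for t
    proof -
      define x where "x = a * (m - t)"
      have x: "0 \<le> x" "x \<le> A" using t a by (auto simp: x_def t1_def field_simps)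
      have tt0: "t \<ge> t0" using t t1 by auto
      have r: "1 - e1 \<le> g' t / a" using elim t by (auto simp: t1_def a_def)
      have "g' t \<ge> (1 - e1) * a" using r a by (simp add: field_simps)
      then have lo: "(1 - e1) * x \<le> g m - g t"
        using gb1[OF tt0 t(2)] t x by (smt (verit, best) mult.assoc mult_right_mono x_def)
      have hi: "g m - g t \<le> x" using gb2[OF tt0 t(2)] by (simp add: x_def a_def)
      have d: "\<bar>(g t - g m) - (- x)\<bar> \<le> e / 4"
        using lo hi x e1 A mult_left_mono[OF x(2) less_imp_le[OF e1(1)]] by (smt (verit, ccfv_SIG) left_diff_distrib mult.commute mult_cancel_right1)
      have ft: "f t / f m = exp (g t - g m)" using fexp[OF tt0] fm by (simp add: exp_diff)
      have "exp (g' m * (t - m)) = exp (- x)" by (simp add: x_def a_def algebra_simps)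
      then have "\<bar>f t / f m - exp (g' m * (t - m))\<bar> = \<bar>exp (g t - g m) - exp (- x)\<bar>" using ft by simp
      also have "\<dots> \<le> \<bar>(g t - g m) - (- x)\<bar>" by (rule exp_lip) (use lo hi x e1 e in \<open>auto simp: gmono[OF tt0 t(2)]\<close>)
      finally show ?thesis using d hi x by linarith
    qed
    show ?case
    proof (intro allI impI)
      fix t assume t: "0 \<le> t \<and> t \<le> m"
      show "\<bar>f t / f m - exp (g' m * (t - m))\<bar> \<le> \<epsilon>"
      proof (cases "t \<ge> t1")
        case True then show ?thesis using near[of t] t e by auto
      next
        case False
        have n1: "\<bar>f t1 / f m - exp (g' m * (t1 - m))\<bar> \<le> e / 4" "g m - g t1 \<le> A" using near[of t1] t1 by auto
        have "exp (g' m * (t1 - m)) = exp (- A)" using a by (simp add: t1_def a_def)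
        then have ft1: "f t1 / f m \<le> e / 2" using n1 eA by linarith
        have fmp: "f m > 0" using fm by simp
        have ft1': "f t1 \<ge> f m * (e / 4)"
        proof -
          have "f t1 / f m = exp (g t1 - g m)" using fexp[of t1] fm t1 by (simp add: exp_diff)
          also have "\<dots> \<ge> exp (- A)" using n1(2) by simp
          finally show ?thesis using fmp eA by (simp add: field_simps)
        qed
        have "f t \<le> f t1"
        proof (cases "t \<ge> t0")
          case True then show ?thesis using fmono False by auto
        next
          case False
          then have "f t \<le> Mf" using Mf[of t] t by auto
          also have "Mf \<le> f m * (e / 4)" using elim fm e by (simp add: field_simps)
          finally show ?thesis using ft1' by linarith
        qed
        then have q1: "f t / f m \<le> e / 2" using ft1 fmp by (smt (verit) divide_right_mono)
        have q0: "f t / f m \<ge> 0" using f_nonneg t fmp by auto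
        have "g' m * (t - m) \<le> - A" using False a by (simp add: t1_def a_def field_simps)
        then have "exp (g' m * (t - m)) \<le> e / 4" using eA by (metis exp_le_cancel_iff)
        moreover have "exp (g' m * (t - m)) > 0" by simp
        ultimately show ?thesis using q0 q1 e by linarith
      qed
    qed
  qed
qed

end


lemma W_facts:
  fixes \<gamma> :: real
  assumes g: "\<gamma> > 0"
  defines "c \<equiv> 1 / (8 * \<gamma>^2)"
  defines "W \<equiv> \<lambda>r. -2 * ln (1 + c * r^2)" and "W' \<equiv> \<lambda>r. - (4 * c * r) / (1 + c * r^2)"
    and "W'' \<equiv> \<lambda>r. (4 * c^2 * r^2 - 4 * c) / (1 + c * r^2)^2"
  shows "(W has_real_derivative W' r) (at r)" "(W' has_real_derivative W'' r) (at r)"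
    "exp (W r) = 1 / (1 + c * r^2)^2"
    "r > 0 \<Longrightarrow> W'' r + W' r / r = - exp (W r) / \<gamma>^2"
    "W 0 = 0" "W' 0 = 0" "W r \<le> 0"
proof -
  have c: "c > 0" using g by (simp add: c_def)
  have p: "1 + c * r^2 > 0" using c by (simp add: add_pos_nonneg)
  show "(W has_real_derivative W' r) (at r)"
    unfolding W_def W'_def using p by (auto intro!: derivative_eq_intros simp: field_simps power2_eq_square)
  show "(W' has_real_derivative W'' r) (at r)"
    unfolding W'_def W''_def using p
    by (auto intro!: derivative_eq_intros simp: field_simps power2_eq_square) (metis minus_diff_eq minus_divide_left)
  show e: "exp (W r) = 1 / (1 + c * r^2)^2"
  proof -
    have "exp (W r) = inverse (exp (ln (1 + c * r^2) + ln (1 + c * r^2)))"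
      unfolding W_def by (simp add: exp_minus[symmetric])
    also have "\<dots> = 1 / (1 + c * r^2)^2" unfolding exp_add exp_ln[OF p] by (simp add: power2_eq_square field_simps)
    finally show ?thesis .
  qed
  show "r > 0 \<Longrightarrow> W'' r + W' r / r = - exp (W r) / \<gamma>^2"
  proof -
    assume r: "r > 0"
    have "1 / \<gamma>^2 = 8 * c" using g by (simp add: c_def)
    have "- exp (W r) / \<gamma>^2 = - (1 / \<gamma>^2) * (1 / (1 + c * r^2)^2)" unfolding e by simp
    also have "\<dots> = - 8 * c / (1 + c * r^2)^2" unfolding \<open>1 / \<gamma>^2 = 8 * c\<close> by simp
    also have "\<dots> = W'' r + W' r / r"
    proof -
      define y where "y = 1 + c * r^2"
      have y: "y > 0" "c * r^2 = y - 1" using p by (auto simp: y_def)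
      have "W' r / r = - 4 * c / y" unfolding W'_def y_def[symmetric] using r y by simp
      moreover have "W'' r = (4 * c * (y - 1) - 4 * c) / y^2" unfolding W''_def y_def
        by (simp add: power2_eq_square algebra_simps)
      ultimately have "W'' r + W' r / r = (4 * c * (y - 1) - 4 * c) / y^2 - 4 * c / y" by simp
      also have "\<dots> = - 8 * c / y^2" using y by (simp add: field_simps power2_eq_square)
      finally show ?thesis by (simp add: y_def)
    qed
    finally show ?thesis by simp
  qed
  show "W 0 = 0" "W' 0 = 0" by (auto simp: W_def W'_def)
  show "W r \<le> 0" unfolding W_def using c by simp
qed

lemma stability:
  fixes U U' U'' G :: "real \<Rightarrow> real" and \<gamma> \<epsilon> R :: real
  assumes g: "\<gamma> > 0" and R: "R > 0" and e: "\<epsilon> \<ge> 0"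
    and contU: "continuous_on {0..R} U" and contU': "continuous_on {0..R} U'"
    and dU: "\<And>r. 0 < r \<Longrightarrow> r < R \<Longrightarrow> (U has_real_derivative U' r) (at r)"
    and dU': "\<And>r. 0 < r \<Longrightarrow> r < R \<Longrightarrow> (U' has_real_derivative U'' r) (at r)"
    and U0: "U 0 = 0" and U'0: "U' 0 = 0"
    and ode: "\<And>r. 0 < r \<Longrightarrow> r < R \<Longrightarrow> U'' r + U' r / r = - G r / \<gamma>^2"
    and Gb: "\<And>r. 0 < r \<Longrightarrow> r < R \<Longrightarrow>
        \<bar>G r - exp (-2 * ln (1 + 1 / (8 * \<gamma>^2) * r^2))\<bar> \<le> \<epsilon> + \<bar>U r - (-2 * ln (1 + 1 / (8 * \<gamma>^2) * r^2))\<bar>"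
    and r: "0 \<le> r" "r \<le> R"
  shows "(U r - (-2 * ln (1 + 1 / (8 * \<gamma>^2) * r^2)))^2
       + \<gamma>^2 * (U' r - (- (4 * (1 / (8 * \<gamma>^2)) * r) / (1 + 1 / (8 * \<gamma>^2) * r^2)))^2 \<le> \<epsilon>^2 / 3 * exp (3 * r / \<gamma>)"
proof -
  define c where "c = 1 / (8 * \<gamma>^2)"
  define W where "W = (\<lambda>r. -2 * ln (1 + c * r^2))"
  define W' where "W' = (\<lambda>r::real. - (4 * c * r) / (1 + c * r^2))"
  define W'' where "W'' = (\<lambda>r::real. (4 * c^2 * r^2 - 4 * c) / (1 + c * r^2)^2)"
  have WF1: "\<And>r. (W has_real_derivative W' r) (at r)"
    using W_facts(1)[OF g] unfolding W_def W'_def c_def by simp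
  have WF2: "\<And>r. (W' has_real_derivative W'' r) (at r)"
    using W_facts(2)[OF g] unfolding W''_def W'_def c_def by simp
  have WF4: "\<And>r. r > 0 \<Longrightarrow> W'' r + W' r / r = - exp (W r) / \<gamma>^2"
    using W_facts(4)[OF g] unfolding W_def W''_def W'_def c_def by simp
  have WF5: "W 0 = 0" "W' 0 = 0" by (simp_all add: W_def W'_def)
  note WF = WF1 WF2 WF1 WF4 WF5
  define Q where "Q = (\<lambda>r. (U r - W r)^2 + \<gamma>^2 * (U' r - W' r)^2)"
  define Z where "Z = (\<lambda>r. (Q r + \<epsilon>^2/3) * exp (- 3 * r / \<gamma>))"
  have contW: "continuous_on {0..R} W" "continuous_on {0..R} W'"
    by (rule continuous_at_imp_continuous_on, use WF(1,2) DERIV_isCont in blast)+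
  have contZ: "continuous_on {0..R} Z"
    unfolding Z_def Q_def using contU contU' contW g by (intro continuous_intros) auto
  have Zd: "\<exists>y. (Z has_real_derivative y) (at x) \<and> y \<le> 0" if x: "0 < x" "x < R" for x
  proof -
    define X where "X = U x - W x"
    define X' where "X' = U' x - W' x"
    define X'' where "X'' = U'' x - W'' x"
    define D where "D = G x - exp (W x)"
    have X'': "X'' = - X' / x - D / \<gamma>^2"
    proof -
      have u: "U'' x = - U' x / x - G x / \<gamma>^2" using ode[OF x] by linarith
      have w: "W'' x = - W' x / x - exp (W x) / \<gamma>^2" using WF(4)[OF x(1)] by linarith
      show ?thesis unfolding X''_def X'_def D_def u w by (simp add: diff_divide_distrib algebra_simps)
    qed
    have Db: "\<bar>D\<bar> \<le> \<epsilon> + \<bar>X\<bar>" using Gb[OF x] unfolding D_def X_def W_def c_def by simp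
    define Q' where "Q' = 2 * X * X' + 2 * \<gamma>^2 * X' * X''"
    have dQ: "(Q has_real_derivative Q') (at x)"
      unfolding Q_def Q'_def X_def X'_def X''_def
      by (auto intro!: derivative_eq_intros dU[OF x] dU'[OF x] WF1 WF2 simp: algebra_simps)
    have Q'e: "Q' = 2 * X * X' - 2 * \<gamma>^2 * X'^2 / x - 2 * X' * D"
      unfolding Q'_def X'' using g by (simp add: field_simps power2_eq_square)
    have Qx: "Q x = X^2 + \<gamma>^2 * X'^2" by (simp add: Q_def X_def X'_def)
    have nn: "2 * \<gamma>^2 * X'^2 / x \<ge> 0" using x by simp
    have b1: "- 2 * X' * D \<le> 2 * \<bar>X'\<bar> * (\<epsilon> + \<bar>X\<bar>)"
    proof -
      have "- 2 * X' * D \<le> 2 * \<bar>X'\<bar> * \<bar>D\<bar>" using abs_ge_minus_self[of "X' * D"] by (simp add: abs_mult mult.commute)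
      also have "\<dots> \<le> 2 * \<bar>X'\<bar> * (\<epsilon> + \<bar>X\<bar>)" using Db by (simp add: mult_left_mono)
      finally show ?thesis .
    qed
    have b2: "2 * X * X' \<le> 2 * \<bar>X\<bar> * \<bar>X'\<bar>" using abs_ge_self[of "X * X'"] by (simp add: abs_mult)
    define p where "p = \<bar>X\<bar>"
    define q where "q = \<gamma> * \<bar>X'\<bar>"
    have pq: "4 * p * q + 2 * \<epsilon> * q \<le> 3 * p^2 + 3 * q^2 + \<epsilon>^2"
    proof -
      have "0 \<le> (p - q)^2" "0 \<le> (\<epsilon> - q)^2" by simp_all
      then have "0 \<le> p^2 - 2 * p * q + q^2" "0 \<le> \<epsilon>^2 - 2 * \<epsilon> * q + q^2"
        by (simp_all add: power2_diff)
      moreover have "0 \<le> p^2" by simp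
      ultimately show ?thesis by (simp only: mult.assoc)
    qed
    have "\<gamma> * Q' \<le> \<gamma> * (2 * \<bar>X\<bar> * \<bar>X'\<bar> + 2 * \<bar>X'\<bar> * (\<epsilon> + \<bar>X\<bar>))"
    proof (rule mult_left_mono)
      show "Q' \<le> 2 * \<bar>X\<bar> * \<bar>X'\<bar> + 2 * \<bar>X'\<bar> * (\<epsilon> + \<bar>X\<bar>)"
        using Q'e nn b1 b2 unfolding mult.assoc by linarith
    qed (use g in simp)
    also have "\<dots> = 4 * p * q + 2 * \<epsilon> * q" by (simp add: p_def q_def algebra_simps)
    also have "\<dots> \<le> 3 * Q x + \<epsilon>^2" using pq g by (simp add: Qx p_def q_def power_mult_distrib)
    finally have Q'b: "\<gamma> * Q' \<le> 3 * Q x + \<epsilon>^2" .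
    define z where "z = (Q' - 3 / \<gamma> * (Q x + \<epsilon>^2/3)) * exp (- 3 * x / \<gamma>)"
    have "(Z has_real_derivative z) (at x)"
      unfolding Z_def z_def
      using g by (auto intro!: derivative_eq_intros dQ simp: algebra_simps)
    moreover have "z \<le> 0"
    proof -
      have "Q' - 3 / \<gamma> * (Q x + \<epsilon>^2/3) \<le> 0" using Q'b g by (simp add: field_simps)
      then show ?thesis unfolding z_def by (simp add: mult_nonpos_nonneg)
    qed
    ultimately show ?thesis by blast
  qed
  have "Z r \<le> Z 0"
  proof (rule DERIV_nonpos_imp_decreasing_open[of 0 r Z])
    show "continuous_on {0..r} Z" using contZ r by (auto elim: continuous_on_subset)
  qed (use Zd r in auto)
  also have "Z 0 = \<epsilon>^2 / 3" by (simp add: Z_def Q_def U0 U'0 WF(5) WF(6))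
  finally have "(Q r + \<epsilon>^2/3) * exp (- 3 * r / \<gamma>) \<le> \<epsilon>^2 / 3" by (simp add: Z_def)
  then have "Q r + \<epsilon>^2/3 \<le> \<epsilon>^2 / 3 * exp (3 * r / \<gamma>)"
    by (simp add: exp_minus field_simps)
  moreover have "\<epsilon>^2 / 3 \<ge> 0" by simp
  ultimately have "Q r \<le> \<epsilon>^2 / 3 * exp (3 * r / \<gamma>)" by linarith
  then show ?thesis by (simp add: Q_def W_def W'_def c_def)
qed



lemma ode_basic:
  fixes u u' u'' h f :: "real \<Rightarrow> real" and lam mu :: real
  assumes uC2: "C2_with {0..1} u u' u''"
    and eq: "\<forall>r\<in>{0<..<1}. - u'' r - u' r / r = lam * h r * f (u r)"
    and upos: "\<forall>r\<in>{0<..<1}. u r > 0" and u0: "u 0 = mu" and u'0: "u' 0 = 0" and u1: "u 1 = 0"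
    and lam: "lam > 0" and hpos: "\<forall>r\<in>{0..1}. h r > 0" and fnn: "\<forall>t\<ge>0. f t \<ge> 0"
  shows "\<forall>r\<in>{0..1}. u' r \<le> 0" "\<forall>r\<in>{0..1}. 0 \<le> u r \<and> u r \<le> mu"
proof -
  note cu = C2_cont[OF uC2]
  have du: "(u has_real_derivative u' x) (at x)" "(u' has_real_derivative u'' x) (at x)" if "0 < x" "x < 1" for x
    using C2_at[OF uC2, of x] that by auto
  define P where "P = (\<lambda>r. r * u' r)"
  have Pd: "\<exists>y. (P has_real_derivative y) (at x) \<and> y \<le> 0" if x: "0 < x" "x < 1" for x
  proof -
    have "(P has_real_derivative (u' x + x * u'' x)) (at x)"
      unfolding P_def by (auto intro!: derivative_eq_intros du[OF x])
    moreover have "u' x + x * u'' x = - (x * (lam * h x * f (u x)))"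
    proof -
      have "- u'' x - u' x / x = lam * h x * f (u x)" using eq x by auto
      then have "x * (- u'' x - u' x / x) = x * (lam * h x * f (u x))" by simp
      then show ?thesis using x by (simp add: algebra_simps)
    qed
    moreover have "x * (lam * h x * f (u x)) \<ge> 0"
    proof -
      have "h x > 0" "u x > 0" using x hpos upos by auto
      then have "f (u x) \<ge> 0" using fnn by auto
      then show ?thesis using x lam \<open>h x > 0\<close> by simp
    qed
    ultimately show ?thesis by auto
  qed
  have cP: "continuous_on {0..1} P" unfolding P_def using cu by (intro continuous_intros) auto
  show u'n: "\<forall>r\<in>{0..1}. u' r \<le> 0"
  proof
    fix r :: real assume r: "r \<in> {0..1}"
    show "u' r \<le> 0"
    proof (cases "r = 0")
      case True then show ?thesis using u'0 by simp
    next
      case False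
      have "P r \<le> P 0"
        by (rule DERIV_nonpos_imp_decreasing_open) (use r Pd cP in \<open>auto elim: continuous_on_subset\<close>)
      then have "r * u' r \<le> 0" by (simp add: P_def)
      then show ?thesis using False r by (simp add: mult_le_0_iff)
    qed
  qed
  show "\<forall>r\<in>{0..1}. 0 \<le> u r \<and> u r \<le> mu"
  proof
    fix r :: real assume r: "r \<in> {0..1}"
    have dd: "\<exists>y. (u has_real_derivative y) (at x) \<and> y \<le> 0" if "0 < x" "x < 1" for x
      using du(1)[OF that] u'n that by auto
    have "u r \<le> u 0"
      by (rule DERIV_nonpos_imp_decreasing_open) (use r dd cu in \<open>auto elim: continuous_on_subset\<close>)
    moreover have "u 1 \<le> u r"
      by (rule DERIV_nonpos_imp_decreasing_open) (use r dd cu in \<open>auto elim: continuous_on_subset\<close>)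
    ultimately show "0 \<le> u r \<and> u r \<le> mu" using u0 u1 by simp
  qed
qed

lemma ode_bound:
  fixes u u' u'' h f :: "real \<Rightarrow> real" and lam mu Hm Fm :: real
  assumes uC2: "C2_with {0..1} u u' u''"
    and eq: "\<forall>r\<in>{0<..<1}. - u'' r - u' r / r = lam * h r * f (u r)"
    and upos: "\<forall>r\<in>{0<..<1}. u r > 0" and u0: "u 0 = mu" and u'0: "u' 0 = 0" and u1: "u 1 = 0"
    and lam: "lam > 0" and hpos: "\<forall>r\<in>{0..1}. h r > 0" and fnn: "\<forall>t\<ge>0. f t \<ge> 0"
    and Hm: "\<forall>r\<in>{0..1}. h r \<le> Hm" and Fm: "\<forall>t\<in>{0..mu}. f t \<le> Fm"
  shows "mu \<le> lam * Hm * Fm / 2"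
proof -
  note ub = ode_basic[OF assms(1-9)]
  note cu = C2_cont[OF uC2]
  have du: "(u has_real_derivative u' x) (at x)" "(u' has_real_derivative u'' x) (at x)" if "0 < x" "x < 1" for x
    using C2_at[OF uC2, of x] that by auto
  define c where "c = lam * Hm * Fm"
  have hf: "lam * h x * f (u x) \<le> c" if x: "0 < x" "x < 1" for x
  proof -
    have "u x \<in> {0..mu}" using ub x by auto
    then have "f (u x) \<le> Fm" "f (u x) \<ge> 0" using Fm fnn by auto
    moreover have "h x \<le> Hm" "h x > 0" using Hm hpos x by auto
    ultimately have "h x * f (u x) \<le> Hm * Fm" by (meson less_imp_le mult_mono order_trans)
    then show ?thesis unfolding c_def using lam by (simp add: mult.assoc)
  qed
  have c0: "c \<ge> 0"
  proof -
    have "mu \<ge> 0" using ub(2) u0 by force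
    then have "f mu \<le> Fm" "f mu \<ge> 0" using Fm fnn by auto
    then have "Fm \<ge> 0" by linarith
    moreover have "h 0 \<le> Hm" "h 0 > 0" using Hm hpos by auto
    then have "Hm \<ge> 0" by linarith
    ultimately show ?thesis using lam by (simp add: c_def)
  qed
  define P where "P = (\<lambda>r. r * u' r + c * r^2 / 2)"
  have Pd: "\<exists>y. (P has_real_derivative y) (at x) \<and> y \<ge> 0" if x: "0 < x" "x < 1" for x
  proof -
    have "(P has_real_derivative (u' x + x * u'' x + c * x)) (at x)"
      unfolding P_def by (auto intro!: derivative_eq_intros du[OF x])
    moreover have "u' x + x * u'' x = - (x * (lam * h x * f (u x)))"
    proof -
      have "- u'' x - u' x / x = lam * h x * f (u x)" using eq x by auto
      then have "x * (- u'' x - u' x / x) = x * (lam * h x * f (u x))" by simp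
      then show ?thesis using x by (simp add: algebra_simps)
    qed
    moreover have "x * (lam * h x * f (u x)) \<le> x * c" using hf[OF x] x by simp
    ultimately show ?thesis by (intro exI[of _ "u' x + x * u'' x + c * x"]) (auto simp: algebra_simps)
  qed
  have cP: "continuous_on {0..1} P" unfolding P_def using cu by (intro continuous_intros) auto
  have u'b: "u' r \<ge> - c / 2" if r: "0 < r" "r < 1" for r
  proof -
    have "P 0 \<le> P r"
      by (rule DERIV_nonneg_imp_increasing_open) (use r Pd cP in \<open>auto elim: continuous_on_subset\<close>)
    then have "r * u' r \<ge> - c * r^2 / 2" by (simp add: P_def u'0)
    then have "r * (- c * r / 2) \<le> r * u' r" by (simp add: power2_eq_square algebra_simps)
    then have "u' r \<ge> - c * r / 2" using r mult_le_cancel_left_pos by blast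
    moreover have "c * r \<le> c" using r c0 by (simp add: mult_left_le)
    ultimately show ?thesis by linarith
  qed
  define V where "V = (\<lambda>r. u r + c * r / 2)"
  have Vd: "\<exists>y. (V has_real_derivative y) (at x) \<and> y \<ge> 0" if x: "0 < x" "x < 1" for x
  proof -
    have "(V has_real_derivative (u' x + c / 2)) (at x)"
      unfolding V_def by (auto intro!: derivative_eq_intros du[OF x])
    then show ?thesis using u'b[OF x] by (intro exI[of _ "u' x + c / 2"]) auto
  qed
  have cV: "continuous_on {0..1} V" unfolding V_def using cu by (intro continuous_intros) auto
  have "V 0 \<le> V 1" by (rule DERIV_nonneg_imp_increasing_open) (use Vd cV in auto)
  then show ?thesis by (simp add: V_def u0 u1 c_def)
qed



context fsetting begin

lemma good_n:
  fixes h h' :: "real \<Rightarrow> real" and lam mu \<eta> \<gamma> :: real and u u' u'' :: "real \<Rightarrow> real"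
  assumes h_pos: "\<forall>r\<in>{0..1}. h r > 0"
    and uC2: "C2_with {0..1} u u' u''"
    and eq: "\<forall>r\<in>{0<..<1}. - u'' r - u' r / r = lam * h r * f (u r)"
    and upos: "\<forall>r\<in>{0<..<1}. u r > 0" and u0: "u 0 = mu" and u'0: "u' 0 = 0" and u1: "u 1 = 0"
    and lam: "lam > 0"
    and eta: "0 < \<eta>" "\<eta> \<le> 1"
    and \<gamma>: "\<gamma> = 1 / sqrt (lam * h 0 * f' mu)" and \<gamma>4: "4 * \<gamma> < 1"
    and mut0: "mu > t0"
    and hK: "\<forall>r\<in>{0..4*\<gamma>}. \<bar>h r / h 0 - 1\<bar> \<le> \<eta> * exp (-6) / 400"
    and N1at: "mu - 5 / g' mu > t0 \<and> (\<forall>t. mu - 5 / g' mu \<le> t \<and> t \<le> mu \<longrightarrow> 1 - \<eta>/100 \<le> g' t / g' mu \<and> g' t / g' mu \<le> 1)"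
    and N2at: "\<forall>t. 0 \<le> t \<and> t \<le> mu \<longrightarrow> \<bar>f t / f mu - exp (g' mu * (t - mu))\<bar> \<le> \<eta> * exp (-6) / 200"
  shows "\<forall>r\<in>{0..4*\<gamma>}. t0 < u r \<and> u r \<le> mu
        \<and> \<bar>phi lam h f' u r - (r/\<gamma>)^2 / (1 + (r/\<gamma>)^2/8)^2\<bar> \<le> \<eta>
        \<and> \<bar>psi g' u u' r - ((r/\<gamma>)^2/2) / (1 + (r/\<gamma>)^2/8)\<bar> \<le> \<eta>
        \<and> \<bar>g' (u r) / g' mu - 1\<bar> \<le> \<eta>
        \<and> \<bar>g' mu * (u r - mu)\<bar> \<le> 5 \<and> 0 \<le> g mu - g (u r) \<and> g mu - g (u r) \<le> 5"
proof -
  note ub = ode_basic[OF uC2 eq upos u0 u'0 u1 lam h_pos f_nonneg]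
  define a where "a = g' mu"
  define b where "b = f mu"
  have a: "a > 0" using gp mut0 by (simp add: a_def)
  have b: "b > 0" using f_pos mut0 by (simp add: b_def)
  have f'mu: "f' mu = b * a" using f'_eq[OF mut0] by (simp add: a_def b_def)
  have h0: "h 0 > 0" using h_pos by auto
  define p where "p = lam * h 0 * f' mu"
  have p: "p > 0" using lam h0 a b f'mu by (simp add: p_def)
  have g0: "\<gamma> > 0" using \<gamma> p by (simp add: p_def[symmetric])
  have g2: "\<gamma>^2 = 1 / p" using \<gamma> p by (simp add: p_def[symmetric] power_divide)
  have key: "a * \<gamma>^2 * lam * h 0 * b = 1" using g2 p a b lam h0 by (simp add: p_def f'mu field_simps)
  define eps where "eps = \<eta> * exp (-6) / 100"
  have eps: "eps > 0" "eps * exp 6 = \<eta> / 100" "eps \<le> \<eta> / 100"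
  proof -
    show "eps > 0" using eta by (simp add: eps_def)
    show "eps * exp 6 = \<eta> / 100" by (simp add: eps_def exp_minus field_simps)
    have "exp (-6::real) \<le> 1" by simp
    then show "eps \<le> \<eta> / 100" using eta by (simp add: eps_def mult_left_le)
  qed
  define U where "U = (\<lambda>r. a * (u r - mu))"
  define U' where "U' = (\<lambda>r. a * u' r)"
  define U'' where "U'' = (\<lambda>r. a * u'' r)"
  define G where "G = (\<lambda>r. a * \<gamma>^2 * lam * h r * f (u r))"
  define W where "W = (\<lambda>r::real. -2 * ln (1 + 1 / (8 * \<gamma>^2) * r^2))"
  define W' where "W' = (\<lambda>r::real. - (4 * (1 / (8 * \<gamma>^2)) * r) / (1 + 1 / (8 * \<gamma>^2) * r^2))"
  have Wle: "W r \<le> 0" for r unfolding W_def by simp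
  have Ule: "U r \<le> 0" if "r \<in> {0..1}" for r using ub(2) that a by (simp add: U_def mult_nonneg_nonpos)
  have GKF: "G r = (h r / h 0) * (f (u r) / b)" for r
  proof -
    have "G r = (a * \<gamma>^2 * lam * h 0 * b) * ((h r / h 0) * (f (u r) / b))"
      using h0 b by (simp add: G_def field_simps)
    then show ?thesis using key by simp
  qed
  have stab: "(U r - W r)^2 + \<gamma>^2 * (U' r - W' r)^2 \<le> eps^2 / 3 * exp (3 * r / \<gamma>)"
    if r: "0 \<le> r" "r \<le> 4 * \<gamma>" for r
    unfolding W_def W'_def
  proof (rule stability[of \<gamma> "4 * \<gamma>" eps U U' U'' G])
    show "continuous_on {0..4 * \<gamma>} U" unfolding U_def using C2_cont(1)[OF uC2] \<gamma>4
      by (intro continuous_intros) (auto elim: continuous_on_subset)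
    show "continuous_on {0..4 * \<gamma>} U'" unfolding U'_def using C2_cont(2)[OF uC2] \<gamma>4
      by (intro continuous_intros) (auto elim: continuous_on_subset)
    fix x assume x: "0 < x" "x < 4 * \<gamma>"
    then have x1: "0 < x" "x < 1" using \<gamma>4 by auto
    show "(U has_real_derivative U' x) (at x)" unfolding U_def U'_def
      using C2_at(1)[OF uC2, of x] x1 by (auto intro!: derivative_eq_intros)
    show "(U' has_real_derivative U'' x) (at x)" unfolding U'_def U''_def
      using C2_at(2)[OF uC2, of x] x1 by (auto intro!: derivative_eq_intros)
    show "U'' x + U' x / x = - G x / \<gamma>^2"
    proof -
      have "- u'' x - u' x / x = lam * h x * f (u x)" using eq x1 by auto
      then have e1: "u'' x + u' x / x = - (lam * h x * f (u x))" by linarith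
      have "U'' x + U' x / x = a * (u'' x + u' x / x)" by (simp add: U''_def U'_def distrib_left)
      then have "U'' x + U' x / x = - (a * (lam * h x * f (u x)))" using e1 by simp
      also have "\<dots> = - G x / \<gamma>^2" using g0 by (simp add: G_def field_simps)
      finally show ?thesis .
    qed
    show "\<bar>G x - exp (-2 * ln (1 + 1 / (8 * \<gamma>^2) * x^2))\<bar> \<le> eps + \<bar>U x - (-2 * ln (1 + 1 / (8 * \<gamma>^2) * x^2))\<bar>"
    proof -
      have ux: "0 \<le> u x" "u x \<le> mu" using ub(2) x1 by auto
      define F where "F = f (u x) / b"
      have F0: "F \<ge> 0" using f_nonneg ux b by (simp add: F_def)
      have FU: "\<bar>F - exp (U x)\<bar> \<le> eps / 2"
        using N2at ux by (simp add: F_def b_def U_def a_def eps_def)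
      have "exp (U x) \<le> 1" using Ule[of x] x1 by simp
      then have F2: "F \<le> 2" using FU eps(3) \<open>\<eta> \<le> 1\<close> abs_le_iff[of "F - exp (U x)" "eps / 2"] by linarith
      have K: "\<bar>h x / h 0 - 1\<bar> \<le> eps / 4" using hK x by (simp add: eps_def)
      have "G x - F = (h x / h 0 - 1) * F" unfolding GKF F_def[symmetric] by (simp add: left_diff_distrib)
      then have "\<bar>G x - F\<bar> = \<bar>h x / h 0 - 1\<bar> * F" using F0 by (simp add: abs_mult)
      also have "\<dots> \<le> (eps / 4) * 2" using K F2 F0 eps(1) by (intro mult_mono) auto
      finally have GF: "\<bar>G x - F\<bar> \<le> eps / 2" by simp
      have EW: "\<bar>exp (U x) - exp (W x)\<bar> \<le> \<bar>U x - W x\<bar>" by (rule exp_lip) (use Ule x1 Wle in auto)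
      show ?thesis using GF FU EW unfolding W_def by linarith
    qed
  qed (use g0 eps r in \<open>auto simp: U_def U'_def u0 u'0\<close>)
  show ?thesis
  proof
    fix r assume r: "r \<in> {0..4*\<gamma>}"
    then have r0: "0 \<le> r" "r \<le> 4 * \<gamma>" by auto
    have r1: "r \<in> {0..1}" using r0 \<gamma>4 by auto
    define s where "s = r / \<gamma>"
    have s: "0 \<le> s" "s \<le> 4" "r = \<gamma> * s" using r0 g0 by (auto simp: s_def field_simps)
    have cr: "1 / (8 * \<gamma>^2) * r^2 = s^2 / 8" using g0 by (simp add: s(3) power_mult_distrib)
    define X where "X = U r - W r"
    define Y where "Y = \<gamma> * (U' r - W' r)"
    have "X^2 + Y^2 \<le> eps^2 / 3 * exp (3 * r / \<gamma>)"
      using stab[OF r0] by (simp add: X_def Y_def power_mult_distrib)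
    also have "\<dots> \<le> eps^2 * exp 12"
    proof -
      have "3 * r / \<gamma> \<le> 12" using r0 g0 by (simp add: field_simps)
      then have "exp (3 * r / \<gamma>) \<le> exp 12" by simp
      then have "eps^2 / 3 * exp (3 * r / \<gamma>) \<le> eps^2 / 3 * exp 12" by (simp add: mult_left_mono)
      moreover have "eps^2 / 3 * exp 12 \<le> eps^2 * exp (12::real)" by simp
      ultimately show ?thesis by linarith
    qed
    also have "\<dots> = (\<eta> / 100)^2"
    proof -
      have "exp (12::real) = (exp 6)^2" by (simp add: power2_eq_square exp_add[symmetric])
      then have "eps^2 * exp 12 = (eps * exp 6)^2" by (simp add: power_mult_distrib)
      then show ?thesis using eps(2) by simp
    qed
    finally have XY: "X^2 + Y^2 \<le> (\<eta> / 100)^2" .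
    have Xb: "\<bar>X\<bar> \<le> \<eta> / 100"
    proof -
      have "X^2 \<le> (\<eta> / 100)^2" using XY zero_le_power2[of Y] by linarith
      then have "\<bar>X\<bar> \<le> \<bar>\<eta> / 100\<bar>" using abs_le_square_iff by blast
      then show ?thesis using eta by simp
    qed
    have Yb: "\<bar>Y\<bar> \<le> \<eta> / 100"
    proof -
      have "Y^2 \<le> (\<eta> / 100)^2" using XY zero_le_power2[of X] by linarith
      then have "\<bar>Y\<bar> \<le> \<bar>\<eta> / 100\<bar>" using abs_le_square_iff by blast
      then show ?thesis using eta by simp
    qed
    have Wr: "W r = -2 * ln (1 + s^2/8)" unfolding W_def cr ..
    have "ln (1 + s^2/8) \<le> 2"
    proof -
      have "s^2 \<le> 4^2" using power_mono[OF s(2) s(1), of 2] .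
      then have "1 + s^2/8 \<le> 3" by simp
      then have "ln (1 + s^2/8) \<le> ln 3" by (simp add: add_pos_nonneg)
      also have "ln (3::real) \<le> 3 - 1" by (rule ln_le_minus_one) simp
      finally show ?thesis by simp
    qed
    then have Wlow: "W r \<ge> -4" unfolding Wr by simp
    have Ulow: "U r \<ge> -5" using Wlow Xb eta unfolding X_def by linarith
    have Uup: "U r \<le> 0" using Ule[OF r1] .
    have ur: "u r \<le> mu" "u r \<ge> 0" using ub(2) r1 by auto
    have ulow: "u r \<ge> mu - 5 / a"
    proof -
      have "a * (u r - mu) \<ge> -5" using Ulow by (simp add: U_def)
      then have "u r - mu \<ge> -5 / a" using a by (simp add: field_simps)
      then show ?thesis by simp
    qed
    have ut0: "u r > t0" using ulow N1at by (simp add: a_def)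
    have rho: "1 - \<eta>/100 \<le> g' (u r) / a" "g' (u r) / a \<le> 1"
      using N1at ulow ur by (auto simp: a_def)
    define \<rho> where "\<rho> = g' (u r) / a"
    have rhob: "\<bar>\<rho> - 1\<bar> \<le> \<eta> / 100" "\<rho> \<ge> 0" "\<rho> \<le> 1" using rho eta by (auto simp: \<rho>_def)
    have eW: "exp (W r) = 1 / (1 + s^2/8)^2"
      using W_facts(3)[OF g0, of r] unfolding W_def cr by simp
    have Gb: "\<bar>G r - exp (W r)\<bar> \<le> 2 * \<eta> / 100"
    proof -
      have ux: "0 \<le> u r" "u r \<le> mu" using ur by auto
      define F where "F = f (u r) / b"
      have F0: "F \<ge> 0" using f_nonneg ux b by (simp add: F_def)
      have FU: "\<bar>F - exp (U r)\<bar> \<le> eps / 2"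
        using N2at ux by (simp add: F_def b_def U_def a_def eps_def)
      have "exp (U r) \<le> 1" using Uup by simp
      then have F2: "F \<le> 2" using FU eps(3) \<open>\<eta> \<le> 1\<close> abs_le_iff[of "F - exp (U r)" "eps / 2"] by linarith
      have K: "\<bar>h r / h 0 - 1\<bar> \<le> eps / 4" using hK r by (simp add: eps_def)
      have "G r - F = (h r / h 0 - 1) * F" unfolding GKF F_def[symmetric] by (simp add: left_diff_distrib)
      then have "\<bar>G r - F\<bar> = \<bar>h r / h 0 - 1\<bar> * F" using F0 by (simp add: abs_mult)
      also have "\<dots> \<le> (eps / 4) * 2" using K F2 F0 eps(1) by (intro mult_mono) auto
      finally have GF: "\<bar>G r - F\<bar> \<le> eps / 2" by simp
      have EW: "\<bar>exp (U r) - exp (W r)\<bar> \<le> \<bar>U r - W r\<bar>" by (rule exp_lip) (use Uup Wle in auto)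
      show ?thesis using GF FU EW Xb eps(3) unfolding X_def by linarith
    qed
    have eW1: "exp (W r) \<le> 1" using Wle[of r] by simp
    have G0: "G r \<ge> 0"
    proof -
      have "h r > 0" "f (u r) \<ge> 0" using h_pos r1 f_nonneg ur by auto
      then show ?thesis unfolding GKF[of r] using h0 b by simp
    qed
    have G2: "G r \<le> 2" using Gb eW1 eta abs_le_iff[of "G r - exp (W r)" "2 * \<eta> / 100"] by linarith
    have phieq: "phi lam h f' u r = s^2 * (G r * \<rho>)"
    proof -
      have "f' (u r) = f (u r) * g' (u r)" using f'_eq[OF ut0] .
      then have "phi lam h f' u r = lam * r^2 * h r * (f (u r) * g' (u r))" by (simp add: phi_def)
      also have "\<dots> = s^2 * (G r * \<rho>)"
        using a g0 by (simp add: s(3) G_def \<rho>_def power_mult_distrib field_simps)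
      finally show ?thesis .
    qed
    have phib: "\<bar>phi lam h f' u r - (r/\<gamma>)^2 / (1 + (r/\<gamma>)^2/8)^2\<bar> \<le> \<eta>"
    proof -
      have "(r/\<gamma>)^2 / (1 + (r/\<gamma>)^2/8)^2 = s^2 * exp (W r)" using eW by (simp add: s_def)
      then have "phi lam h f' u r - (r/\<gamma>)^2 / (1 + (r/\<gamma>)^2/8)^2 = s^2 * (G r * \<rho> - exp (W r))"
        using phieq by (simp add: algebra_simps)
      moreover have "\<bar>G r * \<rho> - exp (W r)\<bar> \<le> 4 * \<eta> / 100"
      proof -
        have "G r * \<rho> - exp (W r) = G r * (\<rho> - 1) + (G r - exp (W r))" by (simp add: algebra_simps)
        moreover have "\<bar>G r * (\<rho> - 1)\<bar> \<le> 2 * (\<eta> / 100)"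
        proof -
          have "\<bar>G r\<bar> * \<bar>\<rho> - 1\<bar> \<le> 2 * (\<eta> / 100)" by (rule mult_mono) (use G0 G2 rhob in auto)
          then show ?thesis by (simp add: abs_mult)
        qed
        ultimately show ?thesis using Gb abs_triangle_ineq[of "G r * (\<rho> - 1)" "G r - exp (W r)"] by linarith
      qed
      moreover have "s^2 \<le> 16" using power_mono[OF s(2) s(1), of 2] by simp
      ultimately have "\<bar>phi lam h f' u r - (r/\<gamma>)^2 / (1 + (r/\<gamma>)^2/8)^2\<bar> \<le> 16 * (4 * \<eta> / 100)"
      proof -
        assume a1: "phi lam h f' u r - (r/\<gamma>)^2 / (1 + (r/\<gamma>)^2/8)^2 = s^2 * (G r * \<rho> - exp (W r))"
          and a2: "\<bar>G r * \<rho> - exp (W r)\<bar> \<le> 4 * \<eta> / 100" and a3: "s^2 \<le> 16"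
        have "s^2 * \<bar>G r * \<rho> - exp (W r)\<bar> \<le> 16 * (4 * \<eta> / 100)" by (rule mult_mono) (use a2 a3 in auto)
        then show ?thesis unfolding a1 by (simp add: abs_mult)
      qed
      then show ?thesis using eta by linarith
    qed
    have psib: "\<bar>psi g' u u' r - ((r/\<gamma>)^2/2) / (1 + (r/\<gamma>)^2/8)\<bar> \<le> \<eta>"
    proof -
      define m where "m = (s^2/2) / (1 + s^2/8)"
      have m: "0 \<le> m" "m \<le> 4" unfolding m_def by (auto simp: field_simps add_pos_nonneg)
      have rW: "r * W' r = - m"
      proof -
        have "r * W' r = - (4 * (1 / (8 * \<gamma>^2) * r^2)) / (1 + 1 / (8 * \<gamma>^2) * r^2)"
          unfolding W'_def by (simp add: power2_eq_square)
        then show ?thesis unfolding cr m_def by simp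
      qed
      have "psi g' u u' r = - r * g' (u r) * u' r" by (simp add: psi_def)
      also have "\<dots> = - \<rho> * (r * U' r)" using a by (simp add: \<rho>_def U'_def)
      also have "r * U' r = r * W' r + s * Y" using g0 by (simp add: Y_def s(3) algebra_simps)
      finally have "psi g' u u' r = \<rho> * (m - s * Y)" using rW by (simp add: algebra_simps)
      then have "psi g' u u' r - m = (\<rho> - 1) * m - \<rho> * (s * Y)" by (simp add: algebra_simps)
      moreover have "\<bar>(\<rho> - 1) * m\<bar> \<le> (\<eta> / 100) * 4"
      proof -
        have "\<bar>\<rho> - 1\<bar> * \<bar>m\<bar> \<le> (\<eta> / 100) * 4" by (rule mult_mono) (use rhob m eta in auto)
        then show ?thesis by (simp add: abs_mult)
      qed
      moreover have "\<bar>\<rho> * (s * Y)\<bar> \<le> 1 * (4 * (\<eta> / 100))"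
      proof -
        have h1: "\<bar>s\<bar> * \<bar>Y\<bar> \<le> 4 * (\<eta> / 100)" by (rule mult_mono) (use s Yb in auto)
        have "\<bar>\<rho>\<bar> * (\<bar>s\<bar> * \<bar>Y\<bar>) \<le> 1 * (4 * (\<eta> / 100))" by (rule mult_mono) (use h1 rhob eta in auto)
        then show ?thesis by (simp add: abs_mult)
      qed
      moreover have "((r/\<gamma>)^2/2) / (1 + (r/\<gamma>)^2/8) = m" by (simp add: m_def s_def)
      ultimately show ?thesis using eta abs_triangle_ineq4[of "(\<rho> - 1) * m" "\<rho> * (s * Y)"] by simp
    qed
    have gdiff: "0 \<le> g mu - g (u r)" "g mu - g (u r) \<le> 5"
    proof -
      show "0 \<le> g mu - g (u r)" using gmono[of "u r" mu] ut0 ur by simp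
      have "g mu - g (u r) \<le> g' mu * (mu - u r)" using gb2[of "u r" mu] ut0 ur by simp
      also have "\<dots> = - U r" by (simp add: U_def a_def algebra_simps)
      finally show "g mu - g (u r) \<le> 5" using Ulow by linarith
    qed
    have "\<bar>g' mu * (u r - mu)\<bar> \<le> 5" using Ulow Uup by (simp add: U_def a_def)
    moreover have "\<bar>g' (u r) / g' mu - 1\<bar> \<le> \<eta>"
    proof -
      have "\<bar>\<rho> - 1\<bar> \<le> \<eta>" using rhob(1) eta by linarith
      then show ?thesis by (simp add: \<rho>_def a_def)
    qed
    ultimately show "t0 < u r \<and> u r \<le> mu
        \<and> \<bar>phi lam h f' u r - (r/\<gamma>)^2 / (1 + (r/\<gamma>)^2/8)^2\<bar> \<le> \<eta>
        \<and> \<bar>psi g' u u' r - ((r/\<gamma>)^2/2) / (1 + (r/\<gamma>)^2/8)\<bar> \<le> \<eta>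
        \<and> \<bar>g' (u r) / g' mu - 1\<bar> \<le> \<eta>
        \<and> \<bar>g' mu * (u r - mu)\<bar> \<le> 5 \<and> 0 \<le> g mu - g (u r) \<and> g mu - g (u r) \<le> 5"
      using ut0 ur phib psib gdiff by auto
  qed
qed

end


lemma tendsto_by_eta:
  fixes x :: "nat \<Rightarrow> real"
  assumes c: "c > 0" and H: "\<And>\<eta>. 0 < \<eta> \<Longrightarrow> \<eta> \<le> c \<Longrightarrow> eventually (\<lambda>n. \<bar>x n - L\<bar> \<le> \<eta>) sequentially"
  shows "x \<longlonglongrightarrow> L"
  unfolding tendsto_iff dist_real_def
proof (intro allI impI)
  fix e :: real assume e: "e > 0"
  have "0 < min (e/2) c" "min (e/2) c \<le> c" using e c by auto
  then have "eventually (\<lambda>n. \<bar>x n - L\<bar> \<le> min (e/2) c) sequentially" using H by blast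
  then show "eventually (\<lambda>n. \<bar>x n - L\<bar> < e) sequentially"
    by eventually_elim (use e in \<open>linarith\<close>)
qed

lemma Phi_id:
  fixes s :: real
  shows "2 - s^2 / (1 + s^2/8)^2 = 2 * (s^2 - 8)^2 / (8 + s^2)^2"
proof -
  have p: "8 + s^2 > 0" by (simp add: add_pos_nonneg)
  define D where "D = (8 + s^2)^2"
  have D: "D > 0" using p by (simp add: D_def)
  have e8: "(1 + s^2/8)^2 = D / 64" by (simp add: D_def power2_eq_square field_simps)
  have "s^2 / (1 + s^2/8)^2 = 64 * s^2 / D" unfolding e8 by simp
  then have "2 - s^2 / (1 + s^2/8)^2 = (2 * D - 64 * s^2) / D" using D by (simp add: diff_divide_distrib)
  also have "2 * D - 64 * s^2 = 2 * (s^2 - 8)^2" by (simp add: D_def power2_eq_square algebra_simps)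
  finally show ?thesis by (simp add: D_def)
qed

lemma Phi_le2: "(s::real)^2 / (1 + s^2/8)^2 \<le> 2"
proof -
  have "0 \<le> 2 * (s^2 - 8)^2 / (8 + s^2)^2" by simp
  then show ?thesis using Phi_id[of s] by linarith
qed

lemma sqrt2_facts: "(2 * sqrt 2)^2 = (8::real)" "1 \<le> 2 * sqrt (2::real)" "2 * sqrt (2::real) \<le> 4"
    "(2 * sqrt 2)^2 / (1 + (2 * sqrt 2)^2/8)^2 = (2::real)"
    "((2 * sqrt 2)^2/2) / (1 + (2 * sqrt 2)^2/8) = (2::real)"
proof -
  show a: "(2 * sqrt 2)^2 = (8::real)" by (simp add: power_mult_distrib)
  have "sqrt (2::real) \<ge> 1" by simp
  then show "1 \<le> 2 * sqrt (2::real)" by linarith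
  have "sqrt (2::real) \<le> sqrt (2^2)" by (rule real_sqrt_le_mono) simp
  then have "sqrt (2::real) \<le> 2" by simp
  then show "2 * sqrt (2::real) \<le> 4" by linarith
  show "(2 * sqrt 2)^2 / (1 + (2 * sqrt 2)^2/8)^2 = (2::real)" unfolding a by simp
  show "((2 * sqrt 2)^2/2) / (1 + (2 * sqrt 2)^2/8) = (2::real)" unfolding a by simp
qed

lemma s_close:
  fixes s \<eta> e :: real
  assumes s: "1 \<le> s" "s \<le> 4" and P: "2 - s^2 / (1 + s^2/8)^2 \<le> 2 * \<eta>"
    and eta: "0 \<le> \<eta>" "\<eta> \<le> e^2 / 128" and e: "e > 0"
  shows "\<bar>s - 2 * sqrt 2\<bar> < e"
proof -
  have p: "8 + s^2 > 0" by (simp add: add_pos_nonneg)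
  have s2: "s^2 \<le> 16" using power_mono[OF s(2), of 2] s by simp
  have "2 * (s^2 - 8)^2 / (8 + s^2)^2 \<le> 2 * \<eta>" using P Phi_id[of s] by linarith
  then have "(s^2 - 8)^2 \<le> \<eta> * (8 + s^2)^2" using p by (simp add: field_simps)
  also have "\<dots> \<le> \<eta> * 24^2"
  proof (rule mult_left_mono)
    show "(8 + s^2)^2 \<le> 24^2" using s2 p by (intro power_mono) auto
  qed (use eta in auto)
  also have "\<dots> < (3 * e)^2"
  proof -
    have "e * e > 0" using e by simp
    then show ?thesis using eta by (simp add: power_mult_distrib power2_eq_square field_simps)
  qed
  finally have "(s^2 - 8)^2 < (3 * e)^2" .
  then have "\<bar>s^2 - 8\<bar>^2 < (3 * e)^2" by simp
  then have lt: "\<bar>s^2 - 8\<bar> < 3 * e" by (rule power_less_imp_less_base) (use e in simp)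
  have fac: "s^2 - 8 = (s - 2 * sqrt 2) * (s + 2 * sqrt 2)"
    using sqrt2_facts(1) by (simp add: algebra_simps power2_eq_square)
  have "sqrt (2::real) \<ge> 1" by simp
  then have ge3: "s + 2 * sqrt 2 \<ge> 3" using s by linarith
  have "\<bar>s - 2 * sqrt 2\<bar> * 3 \<le> \<bar>s - 2 * sqrt 2\<bar> * (s + 2 * sqrt 2)" using ge3 by (simp add: mult_left_mono)
  also have "\<dots> = \<bar>s^2 - 8\<bar>" using ge3 by (simp add: fac abs_mult)
  finally have "\<bar>s - 2 * sqrt 2\<bar> * 3 < 3 * e" using lt by linarith
  then show ?thesis by simp
qed



theorem lemma3p3:
  fixes h h' f f' f'' g g' g'' :: "real \<Rightarrow> real"
    and t0 :: real
    and lam mu :: "nat \<Rightarrow> real"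
    and u u' u'' :: "nat \<Rightarrow> real \<Rightarrow> real"
  assumes h_C1: "C1_with {0..1} h h'"
    and h_pos: "\<forall>r\<in>{0..1}. h r > 0"
    and f_C1: "C1_with {0..} f f'"
    and f_nonneg: "\<forall>t\<ge>0. f t \<ge> 0"
    and t0: "t0 \<ge> 0"
    and f_pos: "\<forall>t\<ge>t0. f t > 0"
    and f_C2: "C2_with {t0..} f f' f''"
    and g_def: "\<forall>t\<ge>t0. g t = ln (f t)"
    and g_C2: "C2_with {t0..} g g' g''"
    and H1: "H1 t0 f g g' g''"
    and lam_pos: "\<forall>n. lam n > 0"
    and mu_pos: "\<forall>n. mu n > 0"
    and u_C2: "\<forall>n. C2_with {0..1} (u n) (u' n) (u'' n)"
    and eq: "\<forall>n. \<forall>r\<in>{0<..<1}. - u'' n r - u' n r / r = lam n * h r * f (u n r)"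
    and u_pos: "\<forall>n. \<forall>r\<in>{0<..<1}. u n r > 0"
    and u0: "\<forall>n. u n 0 = mu n"
    and u'0: "\<forall>n. u' n 0 = 0"
    and u1: "\<forall>n. u n 1 = 0"
    and mu_lim: "filterlim mu at_top sequentially"
  shows "\<exists>\<sigma>::nat \<Rightarrow> nat. strict_mono \<sigma> \<and> (\<exists>r1::nat \<Rightarrow> real.
     (\<forall>n. r1 n \<in> {0<..<1} \<and>
        (\<exists>\<delta>>0. \<forall>r. \<bar>r - r1 n\<bar> < \<delta> \<longrightarrow>
            r \<in> {0<..<1} \<and> u (\<sigma> n) r \<ge> t0 \<and>
            phi (lam (\<sigma> n)) h f' (u (\<sigma> n)) r \<le> phi (lam (\<sigma> n)) h f' (u (\<sigma> n)) (r1 n))) \<and>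
     (\<lambda>n. phi (lam (\<sigma> n)) h f' (u (\<sigma> n)) (r1 n)) \<longlonglongrightarrow> 2 \<and>
     (\<lambda>n. psi g' (u (\<sigma> n)) (u' (\<sigma> n)) (r1 n)) \<longlonglongrightarrow> 2 \<and>
     (\<lambda>n. r1 n / (1 / sqrt (lam (\<sigma> n) * h 0 * f' (mu (\<sigma> n))))) \<longlonglongrightarrow> 2 * sqrt 2 \<and>
     (\<lambda>n. (u (\<sigma> n) (r1 n) - mu (\<sigma> n)) / (g (mu (\<sigma> n)) / g' (mu (\<sigma> n))))
        \<in> O(\<lambda>n. 1 / g (mu (\<sigma> n))) \<and>
     (\<lambda>n. g (u (\<sigma> n) (r1 n)) / g (mu (\<sigma> n))) \<longlonglongrightarrow> 1 \<and>
     (\<lambda>n. g' (u (\<sigma> n) (r1 n)) / g' (mu (\<sigma> n))) \<longlonglongrightarrow> 1)"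
proof -
  interpret fsetting f f' g g' g'' t0
    using f_C1 f_nonneg t0 f_pos g_def g_C2 H1 by (simp add: fsetting_def)
  define \<gamma> where "\<gamma> = (\<lambda>n. 1 / sqrt (lam n * h 0 * f' (mu n)))"
  have h0: "h 0 > 0" using h_pos by auto
  have hcont: "continuous_on {0..1} h" using C1_cont(1)[OF h_C1] .
  obtain Hm where Hm: "\<And>r. r \<in> {0..1} \<Longrightarrow> norm (h r) \<le> Hm"
    using continuous_on_compact_bound[OF compact_Icc hcont] by auto
  have Hm': "\<forall>r\<in>{0..1}. h r \<le> Hm" using Hm by (auto dest!: Hm simp: abs_le_iff)
  have Hmpos: "Hm > 0" using Hm'[rule_format, of 0] h0 by simp
  have "continuous_on {0..t0} f" using C1_cont(1)[OF f_C1] by (auto elim: continuous_on_subset)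
  then obtain Mf where Mf: "\<And>t. t \<in> {0..t0} \<Longrightarrow> norm (f t) \<le> Mf"
    using continuous_on_compact_bound[of "{0..t0}" f] by auto
  have comp: "\<And>P. eventually P at_top \<Longrightarrow> eventually (\<lambda>n. P (mu n)) sequentially"
    using mu_lim by (simp add: filterlim_iff)
  have mu_gt: "\<And>M. eventually (\<lambda>n. mu n > M) sequentially"
    using mu_lim by (simp add: filterlim_at_top_dense)
  have un: "C2_with {0..1} (u n) (u' n) (u'' n)" "\<forall>r\<in>{0<..<1}. - u'' n r - u' n r / r = lam n * h r * f (u n r)"
    "\<forall>r\<in>{0<..<1}. u n r > 0" "u n 0 = mu n" "u' n 0 = 0" "u n 1 = 0" "lam n > 0" for n
    using u_C2 eq u_pos u0 u'0 u1 lam_pos by auto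
  have gt0: "g' t0 > 0" using gp by auto
  have fM: "eventually (\<lambda>m. f m \<ge> Mf) at_top"
  proof -
    have "filterlim (\<lambda>m. exp (g m)) at_top at_top" by (rule filterlim_compose[OF exp_at_top gtop])
    then have "eventually (\<lambda>m. exp (g m) \<ge> Mf) at_top" by (simp add: filterlim_at_top)
    then show ?thesis using eventually_ge_at_top[of t0] by eventually_elim (simp add: fexp)
  qed
  have gam: "eventually (\<lambda>n. \<gamma> n > 0 \<and> 4 * \<gamma> n < d) sequentially" if d: "d > 0" for d
  proof -
    define K where "K = 2 * h 0 * g' t0 / Hm"
    have K: "K > 0" using h0 gt0 Hmpos by (simp add: K_def)
    have "eventually (\<lambda>n. mu n > t0 \<and> f (mu n) \<ge> Mf \<and> mu n > 16 / (d^2 * K)) sequentially"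
      using mu_gt[of t0] comp[OF fM] mu_gt[of "16 / (d^2 * K)"] by eventually_elim auto
    then show ?thesis
    proof eventually_elim
      case (elim n)
      have Fm: "\<forall>t\<in>{0..mu n}. f t \<le> f (mu n)"
      proof
        fix t assume t: "t \<in> {0..mu n}"
        show "f t \<le> f (mu n)"
        proof (cases "t \<ge> t0")
          case True then show ?thesis using fmono t by auto
        next
          case False
          then have "norm (f t) \<le> Mf" using Mf t by auto
          then show ?thesis using elim by auto
        qed
      qed
      have bd: "mu n \<le> lam n * Hm * f (mu n) / 2"
        by (rule ode_bound[OF un(1-7) h_pos f_nonneg Hm' Fm])
      have p1: "lam n * f (mu n) \<ge> 2 * mu n / Hm" using bd Hmpos by (simp add: field_simps)
      have p2: "lam n * h 0 * f' (mu n) = (lam n * f (mu n)) * (h 0 * g' (mu n))"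
        using f'_eq[of "mu n"] elim by simp
      have p3: "h 0 * g' (mu n) \<ge> h 0 * g' t0" using g'mono[of t0 "mu n"] elim h0 by simp
      have mu0: "mu n > 0" using mu_pos by auto
      have "(2 * mu n / Hm) * (h 0 * g' t0) \<le> (lam n * f (mu n)) * (h 0 * g' (mu n))"
      proof (rule mult_mono[OF p1 p3])
        have "2 * mu n / Hm \<ge> 0" using mu0 Hmpos by simp
        then show "0 \<le> lam n * f (mu n)" using p1 by linarith
      qed (use h0 gt0 in auto)
      moreover have "(2 * mu n / Hm) * (h 0 * g' t0) = K * mu n" by (simp add: K_def)
      moreover have "K * mu n > 16 / d^2" using elim K d by (simp add: field_simps)
      ultimately have "lam n * h 0 * f' (mu n) > 16 / d^2" unfolding p2 by linarith
      then have pb: "lam n * h 0 * f' (mu n) > (4 / d)^2" by (simp add: power_divide)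
      then have sq: "sqrt (lam n * h 0 * f' (mu n)) > 4 / d" by (rule real_less_rsqrt)
      have "4 / d > 0" using d by simp
      have "1 / sqrt (lam n * h 0 * f' (mu n)) < 1 / (4 / d)"
      proof (rule divide_strict_left_mono)
        have "sqrt (lam n * h 0 * f' (mu n)) > 0" using sq \<open>4 / d > 0\<close> by linarith
        then show "0 < sqrt (lam n * h 0 * f' (mu n)) * (4 / d)" using \<open>4 / d > 0\<close> by simp
      qed (use sq in auto)
      moreover have "sqrt (lam n * h 0 * f' (mu n)) > 0" using sq \<open>4 / d > 0\<close> by linarith
      ultimately show ?case using d by (simp add: \<gamma>_def field_simps)
    qed
  qed
  have hu: "\<exists>d>0. \<forall>r\<in>{0..d}. \<bar>h r / h 0 - 1\<bar> \<le> \<epsilon>" if e: "\<epsilon> > 0" for \<epsilon>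
  proof -
    have "\<epsilon> * h 0 > 0" using e h0 by simp
    then obtain d where d: "d > 0" "\<forall>x'\<in>{0..1}. dist x' 0 < d \<longrightarrow> dist (h x') (h 0) < \<epsilon> * h 0"
      using hcont unfolding continuous_on_iff by (metis atLeastAtMost_iff order_refl zero_le_one)
    show ?thesis
    proof (intro exI[of _ "min (d/2) 1"] conjI ballI)
      show "min (d/2) 1 > (0::real)" using d by simp
      fix r assume r: "r \<in> {0..min (d/2) 1}"
      then have "r \<in> {0..1}" "dist r 0 < d" using d by (auto simp: dist_real_def)
      then have "\<bar>h r - h 0\<bar> < \<epsilon> * h 0" using d by (auto simp: dist_real_def)
      then have "\<bar>h r - h 0\<bar> / h 0 < \<epsilon>" using h0 by (simp add: field_simps)
      moreover have "h r / h 0 - 1 = (h r - h 0) / h 0" using h0 by (simp add: field_simps)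
      ultimately show "\<bar>h r / h 0 - 1\<bar> \<le> \<epsilon>" using h0 by simp
    qed
  qed
  define Good where "Good = (\<lambda>n \<eta>. \<forall>r\<in>{0..4*\<gamma> n}. t0 < u n r \<and> u n r \<le> mu n
        \<and> \<bar>phi (lam n) h f' (u n) r - (r/\<gamma> n)^2 / (1 + (r/\<gamma> n)^2/8)^2\<bar> \<le> \<eta>
        \<and> \<bar>psi g' (u n) (u' n) r - ((r/\<gamma> n)^2/2) / (1 + (r/\<gamma> n)^2/8)\<bar> \<le> \<eta>
        \<and> \<bar>g' (u n r) / g' (mu n) - 1\<bar> \<le> \<eta>
        \<and> \<bar>g' (mu n) * (u n r - mu n)\<bar> \<le> 5 \<and> 0 \<le> g (mu n) - g (u n r) \<and> g (mu n) - g (u n r) \<le> 5)"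
  have good: "eventually (\<lambda>n. Good n \<eta>) sequentially" if eta: "0 < \<eta>" "\<eta> \<le> 1" for \<eta>
  proof -
    have "\<eta> * exp (-6) / 400 > 0" using eta by simp
    then obtain d where d: "d > 0" "\<forall>r\<in>{0..d}. \<bar>h r / h 0 - 1\<bar> \<le> \<eta> * exp (-6) / 400"
      using hu by blast
    have e3: "eventually (\<lambda>n. mu n - 5 / g' (mu n) > t0 \<and> (\<forall>t. mu n - 5 / g' (mu n) \<le> t \<and> t \<le> mu n \<longrightarrow>
        1 - \<eta>/100 \<le> g' t / g' (mu n) \<and> g' t / g' (mu n) \<le> 1)) sequentially"
      by (rule comp[OF N1]) (use eta in auto)
    have e4: "eventually (\<lambda>n. \<forall>t. 0 \<le> t \<and> t \<le> mu n \<longrightarrow> \<bar>f t / f (mu n) - exp (g' (mu n) * (t - mu n))\<bar> \<le> \<eta> * exp (-6) / 200) sequentially"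
      by (rule comp[OF N2]) (use eta in auto)
    have e1: "eventually (\<lambda>n. \<gamma> n > 0 \<and> 4 * \<gamma> n < min d 1) sequentially" by (rule gam) (use d in simp)
    show ?thesis
      using e1 mu_gt[of t0] e3 e4
    proof eventually_elim
      case (elim n)
      have hK: "\<forall>r\<in>{0..4*\<gamma> n}. \<bar>h r / h 0 - 1\<bar> \<le> \<eta> * exp (-6) / 400" using d elim by auto
      have "\<forall>r\<in>{0..4*\<gamma> n}. t0 < u n r \<and> u n r \<le> mu n
        \<and> \<bar>phi (lam n) h f' (u n) r - (r/\<gamma> n)^2 / (1 + (r/\<gamma> n)^2/8)^2\<bar> \<le> \<eta>
        \<and> \<bar>psi g' (u n) (u' n) r - ((r/\<gamma> n)^2/2) / (1 + (r/\<gamma> n)^2/8)\<bar> \<le> \<eta>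
        \<and> \<bar>g' (u n r) / g' (mu n) - 1\<bar> \<le> \<eta>
        \<and> \<bar>g' (mu n) * (u n r - mu n)\<bar> \<le> 5 \<and> 0 \<le> g (mu n) - g (u n r) \<and> g (mu n) - g (u n r) \<le> 5"
        by (rule good_n[OF h_pos un(1-7) eta _ _ _ hK]) (use elim in \<open>auto simp: \<gamma>_def\<close>)
      then show ?case by (simp add: Good_def)
    qed
  qed
  have gpos: "eventually (\<lambda>m. g m > 0) at_top" using gtop by (simp add: filterlim_at_top_dense)
  have "eventually (\<lambda>n. \<gamma> n > 0 \<and> 4 * \<gamma> n < 1 \<and> mu n > t0 \<and> g (mu n) > 0 \<and> Good n (1/100)) sequentially"
  proof -
    have "eventually (\<lambda>n. Good n (1/100)) sequentially" by (rule good) auto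
    then show ?thesis using gam[of 1, OF zero_less_one] mu_gt[of t0] comp[OF gpos] by eventually_elim auto
  qed
  then obtain N0 where N0: "\<And>n. n \<ge> N0 \<Longrightarrow> \<gamma> n > 0 \<and> 4 * \<gamma> n < 1 \<and> mu n > t0 \<and> g (mu n) > 0 \<and> Good n (1/100)"
    by (auto simp: eventually_sequentially)
  define \<sigma> where "\<sigma> = (\<lambda>n::nat. n + N0)"
  have smono: "strict_mono \<sigma>" by (simp add: \<sigma>_def strict_mono_def)
  have B: "\<gamma> (\<sigma> n) > 0 \<and> 4 * \<gamma> (\<sigma> n) < 1 \<and> mu (\<sigma> n) > t0 \<and> g (mu (\<sigma> n)) > 0 \<and> Good (\<sigma> n) (1/100)" for n
    using N0[of "\<sigma> n"] by (simp add: \<sigma>_def)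
  define \<Gamma> where "\<Gamma> = (\<lambda>n. \<gamma> (\<sigma> n))"
  have \<Gamma>: "\<Gamma> n > 0" "4 * \<Gamma> n < 1" for n using B[of n] by (auto simp: \<Gamma>_def)
  define \<phi> where "\<phi> = (\<lambda>n r. phi (lam (\<sigma> n)) h f' (u (\<sigma> n)) r)"
  have GoodD: "t0 < u (\<sigma> n) r \<and> u (\<sigma> n) r \<le> mu (\<sigma> n)
        \<and> \<bar>\<phi> n r - (r/\<Gamma> n)^2 / (1 + (r/\<Gamma> n)^2/8)^2\<bar> \<le> \<eta>
        \<and> \<bar>psi g' (u (\<sigma> n)) (u' (\<sigma> n)) r - ((r/\<Gamma> n)^2/2) / (1 + (r/\<Gamma> n)^2/8)\<bar> \<le> \<eta>
        \<and> \<bar>g' (u (\<sigma> n) r) / g' (mu (\<sigma> n)) - 1\<bar> \<le> \<eta>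
        \<and> \<bar>g' (mu (\<sigma> n)) * (u (\<sigma> n) r - mu (\<sigma> n))\<bar> \<le> 5 \<and> 0 \<le> g (mu (\<sigma> n)) - g (u (\<sigma> n) r)
        \<and> g (mu (\<sigma> n)) - g (u (\<sigma> n) r) \<le> 5"
    if "Good (\<sigma> n) \<eta>" "r \<in> {0..4 * \<Gamma> n}" for n r \<eta>
    using that unfolding Good_def \<phi>_def \<Gamma>_def by blast
  have cont: "continuous_on {\<Gamma> n..4 * \<Gamma> n} (\<phi> n)" for n
  proof -
    have sub: "{\<Gamma> n..4 * \<Gamma> n} \<subseteq> {0..1}" using \<Gamma>[of n] by auto
    have cu: "continuous_on {\<Gamma> n..4 * \<Gamma> n} (u (\<sigma> n))"
      using C2_cont(1)[OF un(1)[of "\<sigma> n"]] sub by (rule continuous_on_subset)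
    have img: "u (\<sigma> n) ` {\<Gamma> n..4 * \<Gamma> n} \<subseteq> {0..}"
      using ode_basic(2)[OF un(1-7)[of "\<sigma> n"] h_pos f_nonneg] sub by auto
    have cf: "continuous_on {\<Gamma> n..4 * \<Gamma> n} (\<lambda>r. f' (u (\<sigma> n) r))"
      by (rule continuous_on_compose2[OF C1_cont(2)[OF f_C1] cu img])
    have ch: "continuous_on {\<Gamma> n..4 * \<Gamma> n} h" using hcont sub by (auto elim: continuous_on_subset)
    show ?thesis unfolding \<phi>_def phi_def by (intro continuous_intros cf ch)
  qed
  have exmax: "\<exists>r. r \<in> {\<Gamma> n..4 * \<Gamma> n} \<and> (\<forall>y\<in>{\<Gamma> n..4 * \<Gamma> n}. \<phi> n y \<le> \<phi> n r)" for n
    using continuous_attains_sup[OF compact_Icc _ cont[of n]] \<Gamma>[of n] by auto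
  define r1 where "r1 = (\<lambda>n. SOME r. r \<in> {\<Gamma> n..4 * \<Gamma> n} \<and> (\<forall>y\<in>{\<Gamma> n..4 * \<Gamma> n}. \<phi> n y \<le> \<phi> n r))"
  have r1: "r1 n \<in> {\<Gamma> n..4 * \<Gamma> n}" "\<And>y. y \<in> {\<Gamma> n..4 * \<Gamma> n} \<Longrightarrow> \<phi> n y \<le> \<phi> n (r1 n)" for n
    using someI_ex[OF exmax[of n]] unfolding r1_def by auto
  have sq: "1 \<le> 2 * sqrt (2::real)" "2 * sqrt (2::real) \<le> 4" using sqrt2_facts by auto
  have at_c: "(c * \<Gamma> n) / \<Gamma> n = c" for c n using \<Gamma>[of n] by simp
  have peak: "\<phi> n (2 * sqrt 2 * \<Gamma> n) \<ge> 2 - \<eta>" "\<phi> n (r1 n) \<ge> 2 - \<eta>" if "Good (\<sigma> n) \<eta>" for n \<eta>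
  proof -
    have m: "2 * sqrt 2 * \<Gamma> n \<in> {0..4 * \<Gamma> n}" "2 * sqrt 2 * \<Gamma> n \<in> {\<Gamma> n..4 * \<Gamma> n}"
      using sq \<Gamma>[of n] by (auto simp: mult_right_mono)
    have "\<bar>\<phi> n (2 * sqrt 2 * \<Gamma> n) - 2\<bar> \<le> \<eta>"
      using GoodD[OF that m(1)] unfolding at_c sqrt2_facts(4) by blast
    then show "\<phi> n (2 * sqrt 2 * \<Gamma> n) \<ge> 2 - \<eta>" by linarith
    then show "\<phi> n (r1 n) \<ge> 2 - \<eta>" using r1(2)[OF m(2)] by linarith
  qed
  have interior: "\<Gamma> n < r1 n \<and> r1 n < 4 * \<Gamma> n" for n
  proof -
    have G: "Good (\<sigma> n) (1/100)" using B by blast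
    have m1: "\<Gamma> n \<in> {0..4 * \<Gamma> n}" "4 * \<Gamma> n \<in> {0..4 * \<Gamma> n}" using \<Gamma>[of n] by auto
    have "\<bar>\<phi> n (1 * \<Gamma> n) - 1 / (1 + 1/8)^2\<bar> \<le> 1/100"
      using GoodD[OF G, of "1 * \<Gamma> n"] m1 unfolding at_c by simp
    moreover have "(9/8::real)^2 = 81/64" "(3::real)^2 = 9" by (simp_all add: power2_eq_square)
    ultimately have "\<bar>\<phi> n (\<Gamma> n) - 64/81\<bar> \<le> 1/100" by simp
    then have a1: "\<phi> n (\<Gamma> n) < 2 - 1/100" using abs_le_iff[of "\<phi> n (\<Gamma> n) - 64/81" "1/100"] by linarith
    have "\<bar>\<phi> n (4 * \<Gamma> n) - 4^2 / (1 + 4^2/8)^2\<bar> \<le> 1/100"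
      using GoodD[OF G, of "4 * \<Gamma> n"] m1 unfolding at_c by blast
    moreover have "(4::real)^2 = 16" "(3::real)^2 = 9" by (simp_all add: power2_eq_square)
    ultimately have "\<bar>\<phi> n (4 * \<Gamma> n) - 16/9\<bar> \<le> 1/100" by simp
    then have a2: "\<phi> n (4 * \<Gamma> n) < 2 - 1/100" using abs_le_iff[of "\<phi> n (4 * \<Gamma> n) - 16/9" "1/100"] by linarith
    have "\<phi> n (r1 n) \<ge> 2 - 1/100" using peak(2)[OF G] .
    then have "r1 n \<noteq> \<Gamma> n" "r1 n \<noteq> 4 * \<Gamma> n" using a1 a2 by auto
    then show ?thesis using r1(1)[of n] by auto
  qed
  have part1: "\<forall>n. r1 n \<in> {0<..<1} \<and>
        (\<exists>\<delta>>0. \<forall>r. \<bar>r - r1 n\<bar> < \<delta> \<longrightarrow>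
            r \<in> {0<..<1} \<and> u (\<sigma> n) r \<ge> t0 \<and>
            phi (lam (\<sigma> n)) h f' (u (\<sigma> n)) r \<le> phi (lam (\<sigma> n)) h f' (u (\<sigma> n)) (r1 n))"
  proof
    fix n
    have G: "Good (\<sigma> n) (1/100)" using B by blast
    note I = interior[of n] \<Gamma>[of n]
    show "r1 n \<in> {0<..<1} \<and>
        (\<exists>\<delta>>0. \<forall>r. \<bar>r - r1 n\<bar> < \<delta> \<longrightarrow>
            r \<in> {0<..<1} \<and> u (\<sigma> n) r \<ge> t0 \<and>
            phi (lam (\<sigma> n)) h f' (u (\<sigma> n)) r \<le> phi (lam (\<sigma> n)) h f' (u (\<sigma> n)) (r1 n))"
    proof (intro conjI exI[of _ "min (r1 n - \<Gamma> n) (4 * \<Gamma> n - r1 n)"] allI impI)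
      show "r1 n \<in> {0<..<1}" using I by auto
      show "min (r1 n - \<Gamma> n) (4 * \<Gamma> n - r1 n) > 0" using I by auto
      fix r assume r: "\<bar>r - r1 n\<bar> < min (r1 n - \<Gamma> n) (4 * \<Gamma> n - r1 n)"
      then have rr: "\<Gamma> n < r" "r < 4 * \<Gamma> n" by (auto simp: abs_less_iff)
      show "r \<in> {0<..<1}" using rr I by auto
      show "u (\<sigma> n) r \<ge> t0" using GoodD[OF G, of r] rr I by auto
      show "phi (lam (\<sigma> n)) h f' (u (\<sigma> n)) r \<le> phi (lam (\<sigma> n)) h f' (u (\<sigma> n)) (r1 n)"
        using r1(2)[of r n] rr unfolding \<phi>_def by auto
    qed
  qed
  have sfilt: "filterlim \<sigma> sequentially sequentially" using smono by (rule filterlim_subseq)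
  have goodS: "eventually (\<lambda>n. Good (\<sigma> n) \<eta>) sequentially" if "0 < \<eta>" "\<eta> \<le> 1" for \<eta>
  proof -
    have "\<forall>P. eventually P sequentially \<longrightarrow> eventually (\<lambda>x. P (\<sigma> x)) sequentially"
      using sfilt by (simp add: filterlim_iff)
    then show ?thesis using good[OF that] by blast
  qed
  define s where "s = (\<lambda>n. r1 n / \<Gamma> n)"
  have s14: "1 \<le> s n" "s n \<le> 4" for n
    using r1(1)[of n] \<Gamma>[of n] by (auto simp: s_def field_simps)
  have r1in: "r1 n \<in> {0..4 * \<Gamma> n}" for n using r1(1)[of n] \<Gamma>[of n] by auto
  have Gr1: "\<bar>\<phi> n (r1 n) - (s n)^2 / (1 + (s n)^2/8)^2\<bar> \<le> \<eta>"
        "\<bar>psi g' (u (\<sigma> n)) (u' (\<sigma> n)) (r1 n) - ((s n)^2/2) / (1 + (s n)^2/8)\<bar> \<le> \<eta>"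
        "\<bar>g' (u (\<sigma> n) (r1 n)) / g' (mu (\<sigma> n)) - 1\<bar> \<le> \<eta>"
        "\<bar>g' (mu (\<sigma> n)) * (u (\<sigma> n) (r1 n) - mu (\<sigma> n))\<bar> \<le> 5"
        "0 \<le> g (mu (\<sigma> n)) - g (u (\<sigma> n) (r1 n))" "g (mu (\<sigma> n)) - g (u (\<sigma> n) (r1 n)) \<le> 5"
    if "Good (\<sigma> n) \<eta>" for n \<eta>
    using GoodD[OF that r1in[of n]] unfolding s_def by auto
  have Lphi: "(\<lambda>n. \<phi> n (r1 n)) \<longlonglongrightarrow> 2"
  proof (rule tendsto_by_eta[of "1/100"])
    fix \<eta> :: real assume e: "0 < \<eta>" "\<eta> \<le> 1/100"
    have ev: "eventually (\<lambda>n. Good (\<sigma> n) \<eta>) sequentially" by (rule goodS) (use e in auto)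
    show "eventually (\<lambda>n. \<bar>\<phi> n (r1 n) - 2\<bar> \<le> \<eta>) sequentially"
      using ev
    proof eventually_elim
      case (elim n)
      have "\<phi> n (r1 n) \<ge> 2 - \<eta>" using peak(2)[OF elim(1)] .
      moreover have "\<phi> n (r1 n) \<le> 2 + \<eta>" using Gr1(1)[OF elim(1)] Phi_le2[of "s n"] by linarith
      ultimately show ?case by linarith
    qed
  qed simp
  have Ls: "s \<longlonglongrightarrow> 2 * sqrt 2"
    unfolding tendsto_iff dist_real_def
  proof (intro allI impI)
    fix e :: real assume e: "e > 0"
    define \<eta> where "\<eta> = min (1/100) (e^2/128)"
    have eta: "0 < \<eta>" "\<eta> \<le> 1" "\<eta> \<le> e^2/128" using e by (auto simp: \<eta>_def)
    show "eventually (\<lambda>n. \<bar>s n - 2 * sqrt 2\<bar> < e) sequentially"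
      using goodS[OF eta(1,2)]
    proof eventually_elim
      case (elim n)
      have "2 - (s n)^2 / (1 + (s n)^2/8)^2 \<le> 2 * \<eta>"
        using peak(2)[OF elim] Gr1(1)[OF elim] by linarith
      then show ?case by (rule s_close[OF s14]) (use eta e in auto)
    qed
  qed
  have Lm: "(\<lambda>n. ((s n)^2/2) / (1 + (s n)^2/8)) \<longlonglongrightarrow> 2"
  proof -
    have "(\<lambda>n. ((s n)^2/2) / (1 + (s n)^2/8)) \<longlonglongrightarrow> ((2 * sqrt 2)^2/2) / (1 + (2 * sqrt 2)^2/8)"
      by (intro tendsto_intros Ls) (simp_all add: sqrt2_facts(1))
    then show ?thesis unfolding sqrt2_facts(5) .
  qed
  have Lpsi0: "(\<lambda>n. psi g' (u (\<sigma> n)) (u' (\<sigma> n)) (r1 n) - ((s n)^2/2) / (1 + (s n)^2/8)) \<longlonglongrightarrow> 0"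
  proof (rule tendsto_by_eta[of 1])
    fix \<eta> :: real assume e: "0 < \<eta>" "\<eta> \<le> 1"
    show "eventually (\<lambda>n. \<bar>psi g' (u (\<sigma> n)) (u' (\<sigma> n)) (r1 n) - ((s n)^2/2) / (1 + (s n)^2/8) - 0\<bar> \<le> \<eta>) sequentially"
      using goodS[OF e] by eventually_elim (use Gr1(2) in auto)
  qed simp
  have Lpsi: "(\<lambda>n. psi g' (u (\<sigma> n)) (u' (\<sigma> n)) (r1 n)) \<longlonglongrightarrow> 2"
    using tendsto_add[OF Lpsi0 Lm] by simp
  have Lg': "(\<lambda>n. g' (u (\<sigma> n) (r1 n)) / g' (mu (\<sigma> n))) \<longlonglongrightarrow> 1"
  proof (rule tendsto_by_eta[of 1])
    fix \<eta> :: real assume e: "0 < \<eta>" "\<eta> \<le> 1"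
    show "eventually (\<lambda>n. \<bar>g' (u (\<sigma> n) (r1 n)) / g' (mu (\<sigma> n)) - 1\<bar> \<le> \<eta>) sequentially"
      using goodS[OF e] by eventually_elim (use Gr1(3) in auto)
  qed simp
  have gS: "filterlim (\<lambda>n. g (mu (\<sigma> n))) at_top sequentially"
    by (rule filterlim_compose[OF gtop filterlim_compose[OF mu_lim sfilt]])
  have Lg: "(\<lambda>n. g (u (\<sigma> n) (r1 n)) / g (mu (\<sigma> n))) \<longlonglongrightarrow> 1"
  proof -
    have z: "(\<lambda>n. 5 * inverse (g (mu (\<sigma> n)))) \<longlonglongrightarrow> 0"
      using tendsto_mult_right_zero[OF tendsto_inverse_0_at_top[OF gS], of 5] by simp
    have "(\<lambda>n. g (u (\<sigma> n) (r1 n)) / g (mu (\<sigma> n)) - 1) \<longlonglongrightarrow> 0"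
    proof (rule Lim_null_comparison[OF _ z])
      show "eventually (\<lambda>n. norm (g (u (\<sigma> n) (r1 n)) / g (mu (\<sigma> n)) - 1) \<le> 5 * inverse (g (mu (\<sigma> n)))) sequentially"
      proof (intro always_eventually allI)
        fix n
        have gp': "g (mu (\<sigma> n)) > 0" using B by blast
        have d: "0 \<le> g (mu (\<sigma> n)) - g (u (\<sigma> n) (r1 n))" "g (mu (\<sigma> n)) - g (u (\<sigma> n) (r1 n)) \<le> 5"
          using Gr1(5,6)[of n "1/100"] B by auto
        have "g (u (\<sigma> n) (r1 n)) / g (mu (\<sigma> n)) - 1 = - ((g (mu (\<sigma> n)) - g (u (\<sigma> n) (r1 n))) / g (mu (\<sigma> n)))"
          using gp' by (simp add: field_simps)
        then have "norm (g (u (\<sigma> n) (r1 n)) / g (mu (\<sigma> n)) - 1) = (g (mu (\<sigma> n)) - g (u (\<sigma> n) (r1 n))) / g (mu (\<sigma> n))"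
          using d gp' by simp
        also have "\<dots> \<le> 5 / g (mu (\<sigma> n))" using d gp' by (simp add: divide_right_mono)
        finally show "norm (g (u (\<sigma> n) (r1 n)) / g (mu (\<sigma> n)) - 1) \<le> 5 * inverse (g (mu (\<sigma> n)))"
          by (simp add: divide_inverse)
      qed
    qed
    then show ?thesis using tendsto_add[of _ 0 sequentially "\<lambda>_. 1" 1] by (simp add: LIM_zero_iff)
  qed
  have LO: "(\<lambda>n. (u (\<sigma> n) (r1 n) - mu (\<sigma> n)) / (g (mu (\<sigma> n)) / g' (mu (\<sigma> n))))
        \<in> O(\<lambda>n. 1 / g (mu (\<sigma> n)))"
  proof (rule bigoI[of _ 5])
    show "eventually (\<lambda>n. norm ((u (\<sigma> n) (r1 n) - mu (\<sigma> n)) / (g (mu (\<sigma> n)) / g' (mu (\<sigma> n))))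
        \<le> 5 * norm (1 / g (mu (\<sigma> n)))) sequentially"
    proof (intro always_eventually allI)
      fix n
      have gp': "g (mu (\<sigma> n)) > 0" "g' (mu (\<sigma> n)) > 0" using B[of n] gp by auto
      have d: "\<bar>g' (mu (\<sigma> n)) * (u (\<sigma> n) (r1 n) - mu (\<sigma> n))\<bar> \<le> 5"
        using Gr1(4)[of n "1/100"] B by auto
      have "(u (\<sigma> n) (r1 n) - mu (\<sigma> n)) / (g (mu (\<sigma> n)) / g' (mu (\<sigma> n)))
          = (g' (mu (\<sigma> n)) * (u (\<sigma> n) (r1 n) - mu (\<sigma> n))) / g (mu (\<sigma> n))"
        using gp' by (simp add: field_simps)
      then have "norm ((u (\<sigma> n) (r1 n) - mu (\<sigma> n)) / (g (mu (\<sigma> n)) / g' (mu (\<sigma> n))))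
          = \<bar>g' (mu (\<sigma> n)) * (u (\<sigma> n) (r1 n) - mu (\<sigma> n))\<bar> / g (mu (\<sigma> n))" using gp' by (simp add: mult.commute)
      also have "\<dots> \<le> 5 / g (mu (\<sigma> n))" using d gp' by (simp add: divide_right_mono)
      finally show "norm ((u (\<sigma> n) (r1 n) - mu (\<sigma> n)) / (g (mu (\<sigma> n)) / g' (mu (\<sigma> n))))
        \<le> 5 * norm (1 / g (mu (\<sigma> n)))" using gp' by simp
    qed
  qed
  have sexp: "(\<lambda>n. r1 n / (1 / sqrt (lam (\<sigma> n) * h 0 * f' (mu (\<sigma> n))))) = s"
    by (simp add: s_def \<Gamma>_def \<gamma>_def)
  show ?thesis
    apply (rule exI[of _ \<sigma>])
    apply (rule conjI[OF smono])
    apply (rule exI[of _ r1])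
    using part1 Lphi Lpsi Ls Lg Lg' LO unfolding sexp \<phi>_def by blast
qed



end
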